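(* Let $E=[-1,1]$, $D=\widehat{\mathbb C}\setminus E$, let $F\subset\mathbb R\setminus E$ be compact, let $\mu$ be a probability measure on $F$, and set $$v(z;\mu):=\int\log|1-\varphi(z)\varphi(t)|\,d\mu(t),\quad z\in D.$$ Then $$v(z;\mu)=-\frac12U^{\beta_E(\mu)+\tau_E}(z)+\mathrm{const}.$$
   Context: $\varphi(z)=z+(z^2-1)^{1/2}$ with the branch $(z^2-1)^{1/2}/z\to1$ as $z\to\infty$ (real-valued on $\mathbb R\setminus E$). $U^\nu(z)=\int\log\frac1{|z-t|}\,d\nu(t)$ is the logarithmic potential, $\beta_E(\mu)$ is the balayage of $\mu$ from $D$ onto $E$, and $\tau_E=\frac1\pi\frac{dx}{\sqrt{1-x^2}}$ is the Chebyshev (equilibrium) measure of $E$. *)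

theory Defs
  imports "HOL-Probability.Probability"
begin

definition E_int :: "complex set" where
  "E_int = complex_of_real ` {-1..1}"

text \<open>phi(z) = z + (z^2-1)^(1/2), with the branch of (z^2-1)^(1/2) that behaves like z
  at infinity; on C minus [-1,1] this branch is csqrt(z-1) * csqrt(z+1).\<close>
definition phi :: "complex \<Rightarrow> complex" where
  "phi z = z + csqrt (z - 1) * csqrt (z + 1)"

definition log_potential :: "complex measure \<Rightarrow> complex \<Rightarrow> real" where
  "log_potential \<nu> z = (\<integral>t. ln (1 / cmod (z - t)) \<partial>\<nu>)"

definition measure_add :: "'a measure \<Rightarrow> 'a measure \<Rightarrow> 'a measure" where
  "measure_add M N = measure_of (space M) (sets M) (\<lambda>A. emeasure M A + emeasure N A)"

definition tau_E :: "complex measure" where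
  "tau_E = distr (density lborel (\<lambda>x. ennreal (indicator {-1<..<1} x / (pi * sqrt (1 - x\<^sup>2)))))
                 borel complex_of_real"

text \<open>nu is the balayage of mu onto E (out of the unbounded domain D = complement of E):
  a finite Borel measure supported on E with the same total mass as mu, whose potential
  is finite on E and equals the potential of mu up to an additive constant on E
  (E = [-1,1] is regular, so the equality holds everywhere on E).\<close>
definition balayage_onto :: "complex set \<Rightarrow> complex measure \<Rightarrow> complex measure \<Rightarrow> bool" where
  "balayage_onto E \<mu> \<nu> \<longleftrightarrow>
     sets \<nu> = sets borel \<and> finite_measure \<nu> \<and> emeasure \<nu> (UNIV - E) = 0 \<and>
     emeasure \<nu> UNIV = emeasure \<mu> UNIV \<and>
     (\<forall>x\<in>E. integrable \<nu> (\<lambda>t. ln (1 / cmod (x - t)))) \<and>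
     (\<exists>c. \<forall>x\<in>E. log_potential \<nu> x = log_potential \<mu> x + c)"

definition v_pot :: "complex measure \<Rightarrow> complex \<Rightarrow> real" where
  "v_pot \<mu> z = (\<integral>t. ln (cmod (1 - phi z * phi t)) \<partial>\<mu>)"

end

theory Submission
  imports Defs "HOL-Real_Asymp.Real_Asymp"
begin

lemma master_series:
  fixes q :: complex and th :: real
  assumes q: "norm q < 1"
  shows "(\<lambda>n. 2 * cos (real n * th) * Re (q^n) / real n) sums (- ln (cmod (1 - 2*q*cos th + q^2)))"
proof -
  have na: "norm (- (q * cis th)) < 1" "norm (- (q * cis (-th))) < 1" using q by (auto simp: norm_mult)
  have s1: "(\<lambda>n. - ((q * cis th)^n) / of_nat n) sums ln (1 - q * cis th)"
    using Ln_series'[OF na(1)] by simp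
  have s2: "(\<lambda>n. - ((q * cis (-th))^n) / of_nat n) sums ln (1 - q * cis (-th))"
    using Ln_series'[OF na(2)] by simp
  note s3 = sums_Re[OF sums_add[OF s1 s2]]
  have nz1: "1 - q * cis th \<noteq> 0"
  proof
    assume "1 - q * cis th = 0" then have "norm (q * cis th) = 1" by (metis eq_iff_diff_eq_0 norm_one)
    then show False using q by (simp add: norm_mult)
  qed
  have nz2: "1 - q * cis (-th) \<noteq> 0"
  proof
    assume "1 - q * cis (-th) = 0" then have "norm (q * cis (-th)) = 1" by (metis eq_iff_diff_eq_0 norm_one)
    then show False using q by (simp add: norm_mult)
  qed
  have prod: "(1 - q * cis th) * (1 - q * cis (-th)) = 1 - 2*q*cos th + q^2"
  proof -
    have "cis th + cis (-th) = 2 * cos th" by (simp add: complex_eq_iff)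
    moreover have "cis th * cis (-th) = 1" by (simp add: cis_mult)
    ultimately show ?thesis by (simp add: algebra_simps power2_eq_square) (metis (no_types, lifting) distrib_left mult.assoc mult.left_commute)
  qed
  have rhs: "Re (ln (1 - q * cis th) + ln (1 - q * cis (-th))) = ln (cmod (1 - 2*q*cos th + q^2))"
    using nz1 nz2 by (simp add: Re_Ln prod[symmetric] norm_mult ln_mult)
  have terms: "Re (- ((q * cis th)^n) / of_nat n + - ((q * cis (-th))^n) / of_nat n)
      = - (2 * cos (real n * th) * Re (q^n) / real n)" for n
  proof -
    have "(q * cis th)^n + (q * cis (-th))^n = q^n * (cis (n*th) + cis (-(n*th)))"
      using Complex.DeMoivre[of th n] Complex.DeMoivre[of "-th" n] by (simp add: power_mult_distrib algebra_simps)
    also have "cis (n*th) + cis (-(n*th)) = 2 * cos (n*th)"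
      by (simp add: complex_eq_iff cos_minus sin_minus)
    finally have e: "(q * cis th)^n + (q * cis (-th))^n = q^n * (2 * cos (n*th))" .
    have "- ((q * cis th)^n) / of_nat n + - ((q * cis (-th))^n) / of_nat n = - ((q * cis th)^n + (q * cis (-th))^n) / of_nat n"
      by (simp add: diff_divide_distrib)
    also have "\<dots> = - (q^n * (2 * cos (n*th))) / of_nat n" by (simp add: e)
    finally show ?thesis by (simp add: Re_divide_of_nat mult.commute)
  qed
  from s3 have "(\<lambda>n. - (2 * cos (real n * th) * Re (q^n) / real n)) sums ln (cmod (1 - 2*q*cos th + q^2))"
    by (simp only: terms rhs)
  from sums_minus[OF this] show ?thesis by simp
qed


definition sq1 :: "complex \<Rightarrow> complex" where "sq1 z = csqrt (z - 1) * csqrt (z + 1)"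

lemma phi_sq1: "phi z = z + sq1 z" by (simp add: phi_def sq1_def)

lemma sq1_sq: "(sq1 z)^2 = z^2 - 1"
  unfolding sq1_def power_mult_distrib power2_csqrt by (simp add: algebra_simps power2_eq_square)

lemma phi_mult: "phi z * (z - sq1 z) = 1"
proof -
  have "phi z * (z - sq1 z) = z^2 - (sq1 z)^2" by (simp add: phi_sq1 algebra_simps power2_eq_square)
  then show ?thesis by (simp add: sq1_sq)
qed

lemma phi_nz: "phi z \<noteq> 0" using phi_mult[of z] by auto

lemma phi_inv: "1 / phi z = z - sq1 z"
  using phi_mult[of z] phi_nz[of z] by (simp add: field_simps)

lemma phi_J: "(phi z + 1 / phi z) / 2 = z"
  unfolding phi_inv by (simp add: phi_sq1)

lemma csqrt_Im_factor: "Im (csqrt w) = (if Im w = 0 then 1 else sgn (Im w)) * sqrt ((cmod w - Re w) / 2)"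
  by simp

lemma cmod_Re_nonneg: "0 \<le> cmod w - Re w" "0 \<le> cmod w + Re w"
  using abs_Re_le_cmod[of w] by auto

lemma Im_prod_nonneg: "0 \<le> Im (csqrt (z - 1)) * Im (csqrt (z + 1))"
proof (cases "Im z = 0")
  case True
  have "0 \<le> sqrt ((cmod (z-1) - Re (z-1)) / 2)" "0 \<le> sqrt ((cmod (z+1) - Re (z+1)) / 2)"
    using complex_Re_le_cmod[of "z-1"] complex_Re_le_cmod[of "z+1"] by auto
  then show ?thesis using True by simp
next
  case False
  then have ss: "sgn (Im z) * sgn (Im z) = 1" by (simp add: sgn_real_def)
  have eq: "Im (csqrt (z - 1)) * Im (csqrt (z + 1)) = (sgn (Im z) * sgn (Im z)) * (sqrt ((cmod (z-1) - Re (z-1)) / 2) * sqrt ((cmod (z+1) - Re (z+1)) / 2))"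
    using False by (simp add: mult_ac)
  have "0 \<le> sqrt ((cmod (z-1) - Re (z-1)) / 2)" "0 \<le> sqrt ((cmod (z+1) - Re (z+1)) / 2)"
    using complex_Re_le_cmod[of "z-1"] complex_Re_le_cmod[of "z+1"] by auto
  then show ?thesis unfolding eq ss by simp
qed

lemma Re_ab_ident: "Re ((a^2 + b^2) / 2 * cnj (a * b)) = ((cmod a)^2 + (cmod b)^2) * (Re a * Re b + Im a * Im b) / 2"
  by (simp only: cmod_power2) (simp add: power2_eq_square algebra_simps)

lemma norm_pm_ident: "(cmod (x + y))^2 - (cmod (x - y))^2 = 4 * Re (x * cnj y)"
  by (simp only: cmod_power2) (simp add: power2_eq_square algebra_simps)

lemma Re_z_cnj: "Re (z * cnj (sq1 z)) \<ge> 0"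
proof -
  define a where "a = csqrt (z - 1)"
  define b where "b = csqrt (z + 1)"
  have z: "z = (a^2 + b^2) / 2" by (simp add: a_def b_def)
  have s: "sq1 z = a * b" by (simp add: sq1_def a_def b_def)
  have e: "Re (z * cnj (sq1 z)) = ((cmod a)^2 + (cmod b)^2) * (Re a * Re b + Im a * Im b) / 2"
  proof -
    have "z * cnj (sq1 z) = (a^2 + b^2) / 2 * cnj (a * b)" using s z by metis
    then show ?thesis using Re_ab_ident by metis
  qed
  have "Re a * Re b \<ge> 0" unfolding a_def b_def by (intro mult_nonneg_nonneg Re_csqrt)
  moreover have "Im a * Im b \<ge> 0" unfolding a_def b_def by (rule Im_prod_nonneg)
  ultimately show ?thesis unfolding e by simp
qed

lemma phi_ge1: "1 \<le> cmod (phi z)"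
proof -
  have d: "(cmod (z + sq1 z))^2 - (cmod (z - sq1 z))^2 = 4 * Re (z * cnj (sq1 z))"
    by (rule norm_pm_ident)
  have "(cmod (z - sq1 z))^2 \<le> (cmod (z + sq1 z))^2" using d Re_z_cnj[of z] by linarith
  then have ge: "cmod (z - sq1 z) \<le> cmod (z + sq1 z)"
    by (rule power2_le_imp_le) simp
  have "cmod (phi z * (z - sq1 z)) = 1" by (simp only: phi_mult norm_one)
  then have p: "cmod (z + sq1 z) * cmod (z - sq1 z) = 1" by (simp only: norm_mult phi_sq1)
  show ?thesis unfolding phi_sq1
  proof (rule ccontr)
    assume "\<not> 1 \<le> cmod (z + sq1 z)"
    then have lt: "cmod (z + sq1 z) < 1" by simp
    have "cmod (z + sq1 z) * cmod (z - sq1 z) \<le> cmod (z + sq1 z) * cmod (z + sq1 z)"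
      using ge by (intro mult_left_mono) auto
    also have "\<dots> \<le> cmod (z + sq1 z) * 1" using lt by (intro mult_left_mono) auto
    finally show False using p lt by simp
  qed
qed

lemma cis_J: "(cis a + 1 / cis a) / 2 = complex_of_real (cos a)"
proof -
  have "1 / cis a = cis (-a)" by (simp add: divide_inverse cis_inverse)
  then show ?thesis by (simp add: complex_eq_iff)
qed

lemma phi_gt1:
  assumes "z \<notin> E_int" shows "1 < cmod (phi z)"
proof (rule ccontr)
  assume "\<not> 1 < cmod (phi z)"
  then have n1: "cmod (phi z) = 1" using phi_ge1[of z] by simp
  define w where "w = phi z"
  define a where "a = Arg w"
  have "w = rcis (cmod w) a" unfolding a_def by (simp only: rcis_cmod_Arg)
  then have wa: "w = cis a" using n1 unfolding w_def by (simp add: rcis_def)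
  have "z = (w + 1 / w) / 2" unfolding w_def by (simp only: phi_J)
  also have "\<dots> = complex_of_real (cos a)" unfolding wa by (rule cis_J)
  finally have zc: "z = complex_of_real (cos a)" .
  have "cos a \<in> {-1..1}" by simp
  then have "z \<in> E_int" unfolding E_int_def zc by (rule imageI)
  with assms show False by simp
qed

lemma csqrt_measurable[measurable]: "csqrt \<in> borel_measurable borel"
proof -
  have e: "csqrt = (\<lambda>z. Complex (sqrt ((cmod z + Re z) / 2)) ((if Im z = 0 then 1 else sgn (Im z)) * sqrt ((cmod z - Re z) / 2)))"
    by (rule ext) (simp add: complex_eq_iff)
  have "(\<lambda>z. (if Im z = 0 then 1 else sgn (Im z)) * sqrt ((cmod z - Re z) / 2)) \<in> borel_measurable borel"
    by measurable
  moreover have "(\<lambda>z::complex. sqrt ((cmod z + Re z) / 2)) \<in> borel_measurable borel"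
    by measurable
  ultimately show ?thesis unfolding e borel_measurable_complex_iff by simp
qed

lemma phi_measurable[measurable]: "phi \<in> borel_measurable borel"
proof -
  have "phi = (\<lambda>z. z + csqrt (z - 1) * csqrt (z + 1))" by (rule ext) (simp add: phi_def)
  moreover have "(\<lambda>z::complex. z + csqrt (z - 1) * csqrt (z + 1)) \<in> borel_measurable borel" by measurable
  ultimately show ?thesis by simp
qed
lemma phi_real:
  fixes t :: real assumes "1 < \<bar>t\<bar>"
  shows "phi (complex_of_real t) = complex_of_real (t + sgn t * sqrt (t^2 - 1))"
proof (cases "t > 1")
  case True
  then have "csqrt (complex_of_real t - 1) = sqrt (t - 1)" "csqrt (complex_of_real t + 1) = sqrt (t + 1)"
    by simp_all
  moreover have "sqrt (t - 1) * sqrt (t + 1) = sqrt (t^2 - 1)"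
    by (simp add: real_sqrt_mult[symmetric] power2_eq_square algebra_simps)
  ultimately show ?thesis using True unfolding phi_def by (simp flip: of_real_mult)
next
  case False
  then have t: "t < -1" using assms by auto
  then have "csqrt (complex_of_real t - 1) = \<i> * sqrt (1 - t)" "csqrt (complex_of_real t + 1) = \<i> * sqrt (- t - 1)"
    by simp_all
  moreover have "sqrt (1 - t) * sqrt (- 1 - t) = sqrt (t^2 - 1)"
    by (simp add: real_sqrt_mult[symmetric] power2_eq_square algebra_simps)
  ultimately show ?thesis using t unfolding phi_def by (simp flip: of_real_mult add: algebra_simps)
qed


definition P :: "real measure" where
  "P = density lborel (\<lambda>x. ennreal (indicator {-pi..0} x / pi))"

lemma sets_P[simp, measurable_cong]: "sets P = sets borel" by (simp add: P_def)
lemma space_P[simp]: "space P = UNIV" by (simp add: P_def)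

lemma emeasure_P_UNIV: "emeasure P UNIV = 1"
proof -
  have "emeasure P UNIV = (\<integral>\<^sup>+x. ennreal (indicator {-pi..0} x / pi) \<partial>lborel)"
    unfolding P_def by (simp add: emeasure_density)
  also have "\<dots> = (\<integral>\<^sup>+x. ennreal (1/pi) * indicator {-pi..0} x \<partial>lborel)"
    by (intro nn_integral_cong) (auto simp: indicator_def)
  also have "\<dots> = ennreal (1/pi) * ennreal pi"
    by (subst nn_integral_cmult_indicator) auto
  also have "\<dots> = 1" by (simp flip: ennreal_mult)
  finally show ?thesis .
qed

lemma prob_space_P: "prob_space P"
  by (rule prob_spaceI) (simp add: emeasure_P_UNIV)

interpretation P: prob_space P by (rule prob_space_P)

lemma AE_P: "AE x in P. x \<in> {-pi..0}"
  unfolding P_def by (subst AE_density) (auto simp: indicator_def)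

lemma integral_P: fixes g :: "real \<Rightarrow> real" assumes [measurable]: "g \<in> borel_measurable borel"
  shows "integral\<^sup>L P g = (LBINT x. g x * indicator {-pi..0} x) / pi"
proof -
  have "integral\<^sup>L P g = (LINT x|lborel. (indicator {-pi..0} x / pi) *\<^sub>R g x)"
    unfolding P_def by (subst integral_density) auto
  also have "\<dots> = (LINT x|lborel. (g x * indicator {-pi..0} x) / pi)"
    by (intro Bochner_Integration.integral_cong refl) (simp add: mult.commute)
  also have "\<dots> = (LBINT x. g x * indicator {-pi..0} x) / pi" by simp
  finally show ?thesis .
qed

lemma integrable_P_cont: fixes g :: "real \<Rightarrow> real" shows "continuous_on {-pi..0} g \<Longrightarrow> g \<in> borel_measurable borel \<Longrightarrow> integrable P g"
proof -
  assume c: "continuous_on {-pi..0} g" and [measurable]: "g \<in> borel_measurable borel"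
  have "set_integrable lborel {-pi..0} g" by (rule borel_integrable_atLeastAtMost'[OF c])
  then have "integrable lborel (\<lambda>x. (1/pi) *\<^sub>R (indicator {-pi..0} x *\<^sub>R g x))"
    unfolding set_integrable_def by (intro integrable_scaleR_right)
  then have "integrable lborel (\<lambda>x. (indicator {-pi..0} x / pi) *\<^sub>R g x)"
    by (simp add: mult.commute)
  then show "integrable P g" unfolding P_def by (subst integrable_density) auto
qed

lemma integral_P_cos: "integral\<^sup>L P (\<lambda>x. cos (real k * x)) = (if k = 0 then 1 else 0)"
proof (cases "k = 0")
  case True
  then show ?thesis using P.prob_space by simp
next
  case False
  have "(LBINT x. cos (real k * x) * indicator {-pi..0} x) = sin (real k * 0) / k - sin (real k * (-pi)) / k"
    by (rule integral_FTC_Icc_real) (use False in \<open>auto intro!: derivative_eq_intros continuous_intros\<close>)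
  also have "\<dots> = 0" by (simp add: sin_npi)
  finally show ?thesis using False by (subst integral_P) auto
qed

lemma cos_cos_nat: "cos (real n * x) * cos (real m * x) =
   (cos (real (n + m) * x) + cos (real (if m \<le> n then n - m else m - n) * x)) / 2"
proof -
  have "cos (real n * x) * cos (real m * x) = (cos (real n * x - real m * x) + cos (real n * x + real m * x)) / 2"
    by (simp add: cos_diff cos_add)
  moreover have "cos (real n * x - real m * x) = cos (real (if m \<le> n then n - m else m - n) * x)"
  proof (cases "m \<le> n")
    case True
    then have "real (n - m) * x = real n * x - real m * x" by (simp add: of_nat_diff left_diff_distrib)
    then show ?thesis using True by simp
  next
    case False
    then have "real (m - n) * x = - (real n * x - real m * x)" by (simp add: of_nat_diff left_diff_distrib)
    then show ?thesis using False by (simp only: if_False cos_minus)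
  qed
  moreover have "real (n + m) * x = real n * x + real m * x" by (simp add: distrib_right)
  ultimately show ?thesis by (simp only: add.commute)
qed

lemma integral_P_cos_cos: "integral\<^sup>L P (\<lambda>x. cos (real n * x) * cos (real m * x)) =
   (if n = m then (if n = 0 then 1 else 1/2) else 0)"
proof -
  have i1: "integrable P (\<lambda>x. cos (real k * x))" for k
    by (rule integrable_P_cont) (auto intro!: continuous_intros)
  define d where "d = (if m \<le> n then n - m else m - n)"
  have "integral\<^sup>L P (\<lambda>x. cos (real n * x) * cos (real m * x)) =
     integral\<^sup>L P (\<lambda>x. (cos (real (n + m) * x) + cos (real d * x)) / 2)"
    unfolding cos_cos_nat d_def ..
  also have "\<dots> = (integral\<^sup>L P (\<lambda>x. cos (real (n + m) * x)) + integral\<^sup>L P (\<lambda>x. cos (real d * x))) / 2"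
    by (simp only: integral_divide_zero Bochner_Integration.integral_add[OF i1 i1])
  also have "\<dots> = (if n = m then (if n = 0 then 1 else 1/2) else 0)"
    unfolding integral_P_cos d_def by auto
  finally show ?thesis .
qed


lemma sin_neg_interval: "x \<in> {-pi<..<0} \<Longrightarrow> sin x < 0"
  using sin_gt_zero[of "-x"] by auto

lemma cos_interval: assumes "x \<in> {-pi<..<0}" shows "cos x \<in> {-1<..<1}"
proof -
  have "sin x < 0" using sin_neg_interval[OF assms] .
  then have "(sin x)^2 > 0" by simp
  then have "(cos x)^2 < 1" using sin_cos_squared_add[of x] by linarith
  then have "\<bar>cos x\<bar> < 1" by (simp add: abs_square_less_1)
  then show ?thesis by auto
qed

lemma density_eq_distr:
  "density lborel (\<lambda>x. ennreal (indicator {-1<..<1} x / (pi * sqrt (1 - x\<^sup>2)))) = distr P borel cos"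
proof (rule measure_eqI)
  show "sets (density lborel (\<lambda>x. ennreal (indicator {-1<..<1} x / (pi * sqrt (1 - x\<^sup>2))))) = sets (distr P borel cos)"
    by simp
next
  fix A assume "A \<in> sets (density lborel (\<lambda>x. ennreal (indicator {-1<..<1} x / (pi * sqrt (1 - x\<^sup>2)))))"
  then have A[measurable]: "A \<in> sets borel" by simp
  define f where "f x = indicator {-1<..<1} x / (pi * sqrt (1 - x\<^sup>2)) * indicator A x" for x :: real
  have fm: "set_borel_measurable borel {cos (-pi)..cos 0} f"
    unfolding f_def set_borel_measurable_def by measurable
  have sub: "(\<integral>\<^sup>+x. ennreal (f x * indicator {cos (-pi)..cos 0} x) \<partial>lborel) =
      (\<integral>\<^sup>+x. ennreal (f (cos x) * (- sin x) * indicator {-pi..0} x) \<partial>lborel)"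
  proof (rule nn_integral_substitution[where g=cos and g'="\<lambda>x. - sin x" and a="-pi" and b=0 and f=f])
    show "set_borel_measurable borel {cos (-pi)..cos 0} f" by (rule fm)
    show "(cos has_real_derivative - sin x) (at x)" for x by (rule DERIV_cos)
    show "continuous_on {-pi..0} (\<lambda>x. - sin x)" by (intro continuous_intros)
    show "0 \<le> - sin x" if "x \<in> {-pi..0}" for x using sin_ge_zero[of "-x"] that by auto
  qed simp
  have lhs: "emeasure (density lborel (\<lambda>x. ennreal (indicator {-1<..<1} x / (pi * sqrt (1 - x\<^sup>2))))) A
     = (\<integral>\<^sup>+x. ennreal (f x * indicator {cos (-pi)..cos 0} x) \<partial>lborel)"
    by (subst emeasure_density) (auto intro!: nn_integral_cong simp: f_def indicator_def)
  have rhs: "emeasure (distr P borel cos) A = (\<integral>\<^sup>+x. ennreal (indicator {-pi..0} x / pi) * indicator (cos -` A) x \<partial>lborel)"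
  proof -
    have cA: "cos -` A \<in> sets borel" using measurable_sets_borel[OF _ A, of cos] by (simp add: vimage_def)
    have e: "emeasure P (cos -` A) = (\<integral>\<^sup>+x\<in>cos -` A. ennreal (indicator {-pi..0} x / pi) \<partial>lborel)"
      unfolding P_def by (rule emeasure_density) (auto simp: cA)
    show ?thesis by (subst emeasure_distr) (auto simp: e)
  qed
  have ae: "AE x in lborel. x \<noteq> -pi \<and> x \<noteq> 0"
    using AE_lborel_singleton[of "-pi"] AE_lborel_singleton[of 0] by eventually_elim auto
  have mid: "(\<integral>\<^sup>+x. ennreal (f (cos x) * (- sin x) * indicator {-pi..0} x) \<partial>lborel) =
     (\<integral>\<^sup>+x. ennreal (indicator {-pi..0} x / pi) * indicator (cos -` A) x \<partial>lborel)"
  proof (rule nn_integral_cong_AE)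
    show "AE x in lborel. ennreal (f (cos x) * (- sin x) * indicator {-pi..0} x) =
        ennreal (indicator {-pi..0} x / pi) * indicator (cos -` A) x"
      using ae
    proof eventually_elim
      case (elim x)
      show ?case
      proof (cases "x \<in> {-pi..0}")
        case False
        then show ?thesis by simp
      next
        case True
        with elim have x: "x \<in> {-pi<..<0}" by auto
        have s: "sin x < 0" by (rule sin_neg_interval[OF x])
        have c: "cos x \<in> {-1<..<1}" by (rule cos_interval[OF x])
        have sq: "sqrt (1 - (cos x)\<^sup>2) = - sin x"
        proof -
          have "1 - (cos x)\<^sup>2 = (sin x)\<^sup>2" using sin_cos_squared_add[of x] by linarith
          then show ?thesis using s by simp
        qed
        have "f (cos x) * (- sin x) * indicator {-pi..0} x = indicator A (cos x) / pi"
          using c s True unfolding f_def sq by (simp add: field_simps)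
        then show ?thesis using True by (simp add: indicator_def)
      qed
    qed
  qed
  show "emeasure (density lborel (\<lambda>x. ennreal (indicator {-1<..<1} x / (pi * sqrt (1 - x\<^sup>2))))) A = emeasure (distr P borel cos) A"
    unfolding lhs rhs sub mid ..
qed

lemma tau_eq: "tau_E = distr P borel (\<lambda>x. complex_of_real (cos x))"
proof -
  have "tau_E = distr (distr P borel cos) borel complex_of_real"
    unfolding tau_E_def density_eq_distr ..
  also have "\<dots> = distr P borel (complex_of_real \<circ> cos)"
    by (subst distr_distr) auto
  finally show ?thesis by (simp add: comp_def)
qed


definition hh :: "real \<Rightarrow> real \<Rightarrow> real \<Rightarrow> real" where
  "hh a s x = s^2 - 4 * a * s * cos x + 4 * a^2 - 4 * (sin x)^2"

lemma hh_2: "hh a 2 x = 4 * (cos x - a)^2"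
  unfolding hh_def sin_squared_eq by (simp add: power2_eq_square algebra_simps)

lemma hh_diff: "hh a s1 x - hh a s2 x = (s1 - s2) * (s1 + s2 - 4 * a * cos x)"
  unfolding hh_def by (simp add: power2_eq_square algebra_simps)

lemma ac_le1: fixes a x :: real assumes "\<bar>a\<bar> \<le> 1" shows "a * cos x \<le> 1"
proof -
  have "\<bar>a\<bar> * \<bar>cos x\<bar> \<le> 1" by (rule mult_le_one) (use assms in auto)
  then have "\<bar>a * cos x\<bar> \<le> 1" by (simp add: abs_mult)
  then show ?thesis by (simp add: abs_le_iff)
qed

lemma hh_mono: assumes "\<bar>a\<bar> \<le> 1" "2 \<le> s2" "s2 \<le> s1" shows "hh a s2 x \<le> hh a s1 x"
proof -
  have "0 \<le> (s1 - s2) * (s1 + s2 - 4 * a * cos x)"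
    using ac_le1[OF assms(1), of x] assms by (intro mult_nonneg_nonneg) auto
  then show ?thesis using hh_diff[of a s1 x s2] by linarith
qed

lemma hh_pos: assumes "\<bar>a\<bar> \<le> 1" "2 < s" shows "0 < hh a s x"
proof -
  have "0 < (s - 2) * (s + 2 - 4 * a * cos x)"
    using ac_le1[OF assms(1), of x] assms by (intro mult_pos_pos) auto
  then show ?thesis using hh_diff[of a s x 2] hh_2[of a x] by (smt (verit) zero_le_power2)
qed

lemma cmod_sq_ident:
  assumes r: "0 < r"
  shows "(cmod (1 - 2 * (r * cis x) * a + (r * cis x)^2))^2 = r^2 * hh a (r + 1/r) x"
proof -
  define W where "W = Complex ((r + 1/r) * cos x - 2 * a) ((r - 1/r) * sin x)"
  have ss: "sin x * sin x = 1 - cos x * cos x" using sin_squared_eq[of x] by (simp add: power2_eq_square)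
  have e: "1 - 2 * (r * cis x) * a + (r * cis x)^2 = (r * cis x) * W"
    using r by (simp add: W_def complex_eq_iff power2_eq_square field_simps ss)
  have "(cmod W)^2 = ((r + 1/r) * cos x - 2 * a)^2 + ((r - 1/r) * sin x)^2"
    by (simp add: W_def cmod_power2)
  also have "\<dots> = hh a (r + 1/r) x"
    using r unfolding hh_def
    by (simp add: power2_eq_square field_simps ss)
  finally have "(cmod W)^2 = hh a (r + 1/r) x" .
  then show ?thesis unfolding e using r by (simp add: norm_mult power_mult_distrib)
qed


definition rr :: "nat \<Rightarrow> real" where "rr k = 1 - 1 / (real k + 2)"
definition ss :: "nat \<Rightarrow> real" where "ss k = rr k + 1 / rr k"
definition gg :: "real \<Rightarrow> nat \<Rightarrow> real \<Rightarrow> real" where "gg th k x = ln (hh (cos th) (ss k) x) / 2"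

lemma rr_pos: "0 < rr k" and rr_lt1: "rr k < 1"
  unfolding rr_def by (auto simp: field_simps)

lemma rr_mono: "k \<le> l \<Longrightarrow> rr k \<le> rr l"
  unfolding rr_def by (auto simp: field_simps)

lemma ss_gt2: "2 < ss k"
proof -
  have r: "0 < rr k" "rr k < 1" using rr_pos rr_lt1 by auto
  have "0 < (1 - rr k)^2" using r by simp
  then have "2 * rr k < (rr k)^2 + 1" by (simp add: power2_eq_square algebra_simps)
  then show ?thesis unfolding ss_def using r by (simp add: field_simps power2_eq_square)
qed

lemma ss_mono: assumes "k \<le> l" shows "ss l \<le> ss k"
proof -
  have r: "0 < rr k" "rr k \<le> rr l" "rr l < 1" using rr_pos rr_lt1 rr_mono[OF assms] by auto
  have "ss k - ss l = (rr l - rr k) * (1 / (rr k * rr l) - 1)"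
    unfolding ss_def using r by (simp add: field_simps)
  moreover have "1 \<le> 1 / (rr k * rr l)"
  proof -
    have "rr k * rr l \<le> 1 * 1" using r by (intro mult_mono) auto
    then show ?thesis using r by (simp add: field_simps)
  qed
  ultimately have "0 \<le> ss k - ss l" using r by simp
  then show ?thesis by simp
qed

lemma ss_lim: "ss \<longlonglongrightarrow> 2"
proof -
  have "(\<lambda>k::nat. (1 - 1 / (real k + 2)) + 1 / (1 - 1 / (real k + 2))) \<longlonglongrightarrow> 2" by real_asymp
  then show ?thesis unfolding ss_def[abs_def] rr_def .
qed

lemma cos_abs_le1: "\<bar>cos (th::real)\<bar> \<le> 1" by simp

lemma hh_ss_pos: "0 < hh (cos th) (ss k) x"
  by (rule hh_pos[OF cos_abs_le1 ss_gt2])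

lemma gg_ident: "ln (cmod (1 - 2 * (rr k * cis x) * complex_of_real (cos th) + (rr k * cis x)^2)) = ln (rr k) + gg th k x"
proof -
  define X where "X = 1 - 2 * (rr k * cis x) * complex_of_real (cos th) + (rr k * cis x)^2"
  have "(cmod X)^2 = (rr k)^2 * hh (cos th) (ss k) x"
    unfolding X_def ss_def by (rule cmod_sq_ident[OF rr_pos])
  then have "cmod X = rr k * sqrt (hh (cos th) (ss k) x)"
    using rr_pos[of k] hh_ss_pos[of th k x]
    by (metis abs_of_nonneg norm_ge_zero real_sqrt_abs real_sqrt_mult real_sqrt_power less_imp_le)
  then have "ln (cmod X) = ln (rr k) + ln (sqrt (hh (cos th) (ss k) x))"
    using rr_pos[of k] hh_ss_pos[of th k x] by (simp add: ln_mult)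
  also have "\<dots> = ln (rr k) + gg th k x"
    using hh_ss_pos[of th k x] by (simp add: gg_def ln_sqrt)
  finally show ?thesis unfolding X_def by simp
qed

lemma gg_series: "(\<lambda>n. 2 * cos (real n * th) * ((rr k)^n * cos (real n * x)) / real n) sums (- (ln (rr k) + gg th k x))"
proof -
  have q: "norm (rr k * cis x) < 1" using rr_pos[of k] rr_lt1[of k] by (simp add: norm_mult)
  have re: "Re ((rr k * cis x)^n) = (rr k)^n * cos (real n * x)" for n
    by (simp add: power_mult_distrib Complex.DeMoivre)
  from master_series[OF q, of th] show ?thesis unfolding re gg_ident .
qed

lemma gg_cont: "continuous_on UNIV (gg th k)"
proof -
  have "continuous_on UNIV (\<lambda>x. hh (cos th) (ss k) x)" unfolding hh_def by (intro continuous_intros)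
  moreover have nz: "hh (cos th) (ss k) x \<noteq> 0" for x using hh_ss_pos[of th k x] by simp
  ultimately show ?thesis unfolding gg_def[abs_def]
    by (intro continuous_intros) auto
qed

lemma gg_meas[measurable]: "gg th k \<in> borel_measurable borel"
  using gg_cont by (rule borel_measurable_continuous_onI)

lemma integrable_P_contU: fixes g :: "real \<Rightarrow> real" shows "continuous_on UNIV g \<Longrightarrow> integrable P g"
  by (rule integrable_P_cont) (auto intro: continuous_on_subset borel_measurable_continuous_onI)

lemma gg_integral:
  "integral\<^sup>L P (\<lambda>x. gg th k x * cos (real m * x)) =
     - cos (real m * th) * (rr k)^m / real m - ln (rr k) * (if m = 0 then 1 else 0)"
proof -
  define r where "r = rr k"
  have r: "0 < r" "r < 1" using rr_pos rr_lt1 unfolding r_def by auto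
  define f where "f n x = 2 * cos (real n * th) * (r^n * cos (real n * x)) / real n * cos (real m * x)" for n x
  have feq: "f n = (\<lambda>x. (2 * cos (real n * th) * r^n / real n) * (cos (real n * x) * cos (real m * x)))" for n
    unfolding f_def by (auto simp: fun_eq_iff)
  have fi: "integrable P (f n)" for n
    unfolding feq by (intro integrable_P_contU continuous_intros)
  have fb: "\<bar>f n x\<bar> \<le> 2 * r^n" for n x
  proof -
    have "\<bar>f n x\<bar> = 2 * \<bar>cos (real n * th)\<bar> * r^n * \<bar>cos (real n * x)\<bar> / real n * \<bar>cos (real m * x)\<bar>"
      unfolding f_def using r by (simp add: abs_mult)
    also have "\<dots> \<le> 2 * 1 * r^n * 1 / 1 * 1"
    proof (cases "n = 0")
      case True then show ?thesis using r by simp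
    next
      case False
      then show ?thesis using r
        by (intro mult_mono divide_mono mult_nonneg_nonneg) auto
    qed
    finally show ?thesis by simp
  qed
  have geo: "summable (\<lambda>n. 2 * r^n)" using r by (intro summable_mult summable_geometric) auto
  have s1: "AE x in P. summable (\<lambda>n. norm (f n x))"
    by (intro AE_I2 summable_comparison_test'[OF geo]) (use fb in auto)
  have s2: "summable (\<lambda>n. LINT x|P. norm (f n x))"
  proof (rule summable_comparison_test'[OF geo])
    fix n
    have "norm (LINT x|P. norm (f n x)) = (LINT x|P. norm (f n x))" by simp
    also have "\<dots> \<le> (LINT x|P. 2 * r^n)"
      using fi fb by (intro integral_mono) auto
    also have "\<dots> = 2 * r^n" using P.prob_space by simp
    finally show "norm (LINT x|P. norm (f n x)) \<le> 2 * r^n" .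
  qed
  note si = sums_integral[OF fi s1 s2]
  have suminf_f: "(\<Sum>n. f n x) = - (ln r + gg th k x) * cos (real m * x)" for x
    unfolding f_def r_def using sums_mult2[OF gg_series[of th k x], of "cos (real m * x)"]
    by (simp add: sums_iff)
  have intf: "integral\<^sup>L P (f n) = (if n = m then cos (real m * th) * r^m / real m else 0)" for n
  proof -
    have "integral\<^sup>L P (f n) = 2 * cos (real n * th) * r^n / real n * integral\<^sup>L P (\<lambda>x. cos (real n * x) * cos (real m * x))"
      unfolding feq by simp
    then show ?thesis unfolding integral_P_cos_cos by auto
  qed
  from si have "(\<lambda>n. if n = m then cos (real m * th) * r^m / real m else 0) sums
       integral\<^sup>L P (\<lambda>x. - (ln r + gg th k x) * cos (real m * x))"
    unfolding intf suminf_f .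
  moreover have "(\<lambda>n. if n = m then cos (real m * th) * r^m / real m else 0) sums (cos (real m * th) * r^m / real m)"
    using sums_single[of m "\<lambda>_. cos (real m * th) * r^m / real m"] .
  ultimately have e: "integral\<^sup>L P (\<lambda>x. - (ln r + gg th k x) * cos (real m * x)) = cos (real m * th) * r^m / real m"
    by (rule sums_unique2)
  have ig: "integrable P (\<lambda>x. gg th k x * cos (real m * x))"
    by (intro integrable_P_contU continuous_intros gg_cont[THEN continuous_on_subset]) auto
  have ic: "integrable P (\<lambda>x. cos (real m * x))" by (intro integrable_P_contU continuous_intros)
  have "integral\<^sup>L P (\<lambda>x. - (ln r + gg th k x) * cos (real m * x)) =
     - (ln r * integral\<^sup>L P (\<lambda>x. cos (real m * x))) - integral\<^sup>L P (\<lambda>x. gg th k x * cos (real m * x))"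
    using ig ic by (simp add: algebra_simps)
  then show ?thesis using e unfolding integral_P_cos r_def by (auto simp: algebra_simps)
qed


definition LL :: "real \<Rightarrow> real \<Rightarrow> real" where "LL th x = ln (2 * \<bar>cos x - cos th\<bar>)"

lemma LL_meas[measurable]: "LL th \<in> borel_measurable borel"
  unfolding LL_def[abs_def] by measurable

lemma hh2_LL: assumes "cos x \<noteq> cos th" shows "ln (hh (cos th) 2 x) / 2 = LL th x"
proof -
  have p: "0 < 2 * \<bar>cos x - cos th\<bar>" using assms by simp
  have "hh (cos th) 2 x = (2 * \<bar>cos x - cos th\<bar>)^2" unfolding hh_2 by (simp add: power_mult_distrib)
  then have "ln (hh (cos th) 2 x) = ln ((2 * \<bar>cos x - cos th\<bar>)^2)" by (simp only:)
  also have "\<dots> = real 2 * ln (2 * \<bar>cos x - cos th\<bar>)" by (rule ln_realpow)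
  finally have "ln (hh (cos th) 2 x) = real 2 * ln (2 * \<bar>cos x - cos th\<bar>)" .
  then show ?thesis unfolding LL_def by simp
qed

lemma gg_ge_LL: assumes "cos x \<noteq> cos th" shows "LL th x \<le> gg th k x"
proof -
  have p: "0 < hh (cos th) 2 x" unfolding hh_2 using assms by simp
  have "hh (cos th) 2 x \<le> hh (cos th) (ss k) x"
    by (rule hh_mono[OF cos_abs_le1]) (use ss_gt2[of k] in auto)
  then have "ln (hh (cos th) 2 x) \<le> ln (hh (cos th) (ss k) x)" using p by simp
  then show ?thesis unfolding gg_def hh2_LL[OF assms, symmetric] by simp
qed

lemma gg_mono: assumes "k \<le> l" shows "gg th l x \<le> gg th k x"
proof -
  have "hh (cos th) (ss l) x \<le> hh (cos th) (ss k) x"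
    by (rule hh_mono[OF cos_abs_le1]) (use ss_gt2[of l] ss_mono[OF assms] in auto)
  then show ?thesis unfolding gg_def using hh_ss_pos[of th l x] by simp
qed

lemma gg_lim: assumes "cos x \<noteq> cos th" shows "(\<lambda>k. gg th k x) \<longlonglongrightarrow> LL th x"
proof -
  have "(\<lambda>k. hh (cos th) (ss k) x) \<longlonglongrightarrow> hh (cos th) 2 x"
    unfolding hh_def by (intro tendsto_intros ss_lim)
  moreover have "hh (cos th) 2 x \<noteq> 0" unfolding hh_2 using assms by simp
  ultimately have "(\<lambda>k. ln (hh (cos th) (ss k) x) / 2) \<longlonglongrightarrow> ln (hh (cos th) 2 x) / 2"
    by (intro tendsto_intros) simp_all
  then show ?thesis unfolding gg_def hh2_LL[OF assms] .
qed

lemma LL_le: "LL th x \<le> ln 4"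
proof (cases "cos x = cos th")
  case True then show ?thesis by (simp add: LL_def)
next
  case False
  have "\<bar>cos x - cos th\<bar> \<le> \<bar>cos x\<bar> + \<bar>cos th\<bar>" by (rule abs_triangle_ineq4)
  also have "\<dots> \<le> 2" using abs_cos_le_one[of x] abs_cos_le_one[of th] by linarith
  finally have "2 * \<bar>cos x - cos th\<bar> \<le> 4" by simp
  then show ?thesis unfolding LL_def using False by simp
qed

lemma AE_cos_ne: "AE x in P. cos x \<noteq> cos th"
proof -
  have "AE x in lborel. x \<noteq> - arccos (cos th)" by (rule AE_lborel_singleton)
  then have "AE x in P. x \<noteq> - arccos (cos th)"
    unfolding P_def by (subst AE_density) (auto elim!: eventually_mono)
  then show ?thesis using AE_P
  proof eventually_elim
    case (elim x)
    show ?case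
    proof
      assume c: "cos x = cos th"
      have "arccos (cos (-x)) = -x" using elim(2) by (intro arccos_cos) auto
      then have "x = - arccos (cos th)" using c by simp
      with elim(1) show False by simp
    qed
  qed
qed

lemma gg_integral0: "integral\<^sup>L P (gg th k) = - ln (rr k)"
  using gg_integral[of th k 0] by simp

lemma gg_integrable: "integrable P (gg th k)"
  by (rule integrable_P_contU[OF gg_cont])

lemma rr_lim: "rr \<longlonglongrightarrow> 1"
proof -
  have "(\<lambda>k::nat. 1 - 1 / (real k + 2)) \<longlonglongrightarrow> 1" by real_asymp
  then show ?thesis unfolding rr_def[abs_def] .
qed

lemma LL_integral: "integrable P (LL th)" "integral\<^sup>L P (LL th) = 0"
proof -
  have lim: "(\<lambda>k. integral\<^sup>L P (\<lambda>x. - gg th k x)) \<longlonglongrightarrow> 0"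
  proof -
    have "(\<lambda>k. ln (rr k)) \<longlonglongrightarrow> ln 1" by (intro tendsto_intros rr_lim) simp
    then show ?thesis using gg_integral0 by simp
  qed
  have A: "\<And>k. integrable P (\<lambda>x. - gg th k x)" using gg_integrable by simp
    have B: "AE x in P. incseq (\<lambda>k. - gg th k x)"
      by (intro AE_I2) (auto simp: incseq_def intro: gg_mono)
    have C: "AE x in P. (\<lambda>k. - gg th k x) \<longlonglongrightarrow> - LL th x"
      using AE_cos_ne[of th] by eventually_elim (intro tendsto_intros gg_lim)
    have D: "(\<lambda>x. - LL th x) \<in> borel_measurable P" by simp
  show "integrable P (LL th)" using integrable_minus[OF integrable_monotone_convergence[OF A B C lim D]] by simp
  show "integral\<^sup>L P (LL th) = 0" using integral_monotone_convergence[OF A B C lim D] by simp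
qed

lemma LL_cos_integral: assumes "m \<noteq> 0"
  shows "integral\<^sup>L P (\<lambda>x. LL th x * cos (real m * x)) = - cos (real m * th) / real m"
proof -
  have li: "integrable P (LL th)" by (rule LL_integral)
  have w: "integrable P (\<lambda>x. \<bar>gg th 0 x\<bar> + \<bar>LL th x\<bar>)"
    using gg_integrable li by auto
  have conv: "(\<lambda>k. integral\<^sup>L P (\<lambda>x. gg th k x * cos (real m * x))) \<longlonglongrightarrow> integral\<^sup>L P (\<lambda>x. LL th x * cos (real m * x))"
  proof (rule integral_dominated_convergence[OF _ _ w])
    show "(\<lambda>x. LL th x * cos (real m * x)) \<in> borel_measurable P" by simp
    show "(\<lambda>x. gg th k x * cos (real m * x)) \<in> borel_measurable P" for k by simp
    show "AE x in P. (\<lambda>k. gg th k x * cos (real m * x)) \<longlonglongrightarrow> LL th x * cos (real m * x)"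
      using AE_cos_ne[of th] by eventually_elim (intro tendsto_intros gg_lim)
    show "AE x in P. norm (gg th k x * cos (real m * x)) \<le> \<bar>gg th 0 x\<bar> + \<bar>LL th x\<bar>" for k
      using AE_cos_ne[of th]
    proof eventually_elim
      case (elim x)
      have "\<bar>gg th k x\<bar> \<le> \<bar>gg th 0 x\<bar> + \<bar>LL th x\<bar>"
        using gg_ge_LL[OF elim, of k] gg_mono[of 0 k th x] by linarith
      moreover have "\<bar>cos (real m * x)\<bar> \<le> 1" by simp
      ultimately have "\<bar>gg th k x\<bar> * \<bar>cos (real m * x)\<bar> \<le> (\<bar>gg th 0 x\<bar> + \<bar>LL th x\<bar>) * 1"
        by (intro mult_mono) auto
      then show ?case by (simp add: abs_mult)
    qed
  qed
  moreover have "(\<lambda>k. integral\<^sup>L P (\<lambda>x. gg th k x * cos (real m * x))) \<longlonglongrightarrow> - cos (real m * th) * 1^m / real m"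
  proof -
    have "(\<lambda>k. - cos (real m * th) * (rr k)^m / real m) \<longlonglongrightarrow> - cos (real m * th) * 1^m / real m"
      by (intro tendsto_intros rr_lim) (use assms in simp_all)
    then show ?thesis using gg_integral[of th _ m] assms by simp
  qed
  ultimately show ?thesis using LIMSEQ_unique by fastforce
qed

lemma lnabs_eq_AE: "AE x in P. ln \<bar>cos x - cos th\<bar> = LL th x - ln 2"
  using AE_cos_ne[of th] by eventually_elim (simp add: LL_def ln_mult)

lemma lnabs_integrable: "integrable P (\<lambda>x. ln \<bar>cos x - cos th\<bar>)"
proof -
  have "integrable P (\<lambda>x. LL th x - ln 2)" using LL_integral(1) by simp
  then show ?thesis
    by (rule integrable_cong_AE_imp) (use lnabs_eq_AE[of th] in \<open>auto elim: eventually_mono\<close>)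
qed

lemma lnabs_integral: "integral\<^sup>L P (\<lambda>x. ln \<bar>cos x - cos th\<bar>) = - ln 2"
proof -
  have "integral\<^sup>L P (\<lambda>x. ln \<bar>cos x - cos th\<bar>) = integral\<^sup>L P (\<lambda>x. LL th x - ln 2)"
    by (rule integral_cong_AE) (use lnabs_eq_AE[of th] in auto)
  also have "\<dots> = - ln 2" using LL_integral[of th] P.prob_space by simp
  finally show ?thesis .
qed

lemma lnabs_cos_integral: assumes "m \<noteq> 0"
  shows "integral\<^sup>L P (\<lambda>x. ln \<bar>cos x - cos th\<bar> * cos (real m * x)) = - cos (real m * th) / real m"
proof -
  have ic: "integrable P (\<lambda>x. cos (real m * x))" by (intro integrable_P_contU continuous_intros)
  have il: "integrable P (\<lambda>x. LL th x * cos (real m * x))"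
    apply (rule Bochner_Integration.integrable_bound[OF LL_integral(1)[of th]])
     apply simp
    apply (rule AE_I2)
    by (simp add: abs_mult mult_left_le)
  have "integral\<^sup>L P (\<lambda>x. ln \<bar>cos x - cos th\<bar> * cos (real m * x)) = integral\<^sup>L P (\<lambda>x. LL th x * cos (real m * x) - ln 2 * cos (real m * x))"
  proof (rule integral_cong_AE)
    show "AE x in P. ln \<bar>cos x - cos th\<bar> * cos (real m * x) = LL th x * cos (real m * x) - ln 2 * cos (real m * x)"
      using lnabs_eq_AE[of th] by eventually_elim (simp add: left_diff_distrib)
  qed simp_all
  also have "\<dots> = - cos (real m * th) / real m"
    using il ic assms by (simp add: LL_cos_integral integral_P_cos)
  finally show ?thesis .
qed

lemma lnabs_abs_integral: "integral\<^sup>L P (\<lambda>x. \<bar>ln \<bar>cos x - cos th\<bar>\<bar>) \<le> 2 * ln 4 + ln 2"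
proof -
  have li: "integrable P (LL th)" by (rule LL_integral)
  have "integral\<^sup>L P (\<lambda>x. \<bar>ln \<bar>cos x - cos th\<bar>\<bar>) \<le> integral\<^sup>L P (\<lambda>x. 2 * ln 4 - LL th x + ln 2)"
  proof (rule integral_mono_AE)
    show "integrable P (\<lambda>x. \<bar>ln \<bar>cos x - cos th\<bar>\<bar>)" using lnabs_integrable by auto
    show "integrable P (\<lambda>x. 2 * ln 4 - LL th x + ln 2)" using li by auto
    show "AE x in P. \<bar>ln \<bar>cos x - cos th\<bar>\<bar> \<le> 2 * ln 4 - LL th x + ln 2"
      using lnabs_eq_AE[of th]
    proof eventually_elim
      case (elim x)
      have "LL th x \<le> ln 4" by (rule LL_le)
      moreover have "0 \<le> ln (2::real)" "0 \<le> ln (4::real)" by simp_all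
      ultimately show ?case unfolding elim abs_le_iff by linarith
    qed
  qed
  also have "\<dots> = 2 * ln 4 + ln 2" using li LL_integral(2)[of th] P.prob_space by simp
  finally show ?thesis .
qed


lemma series_integral_fm:
  fixes f :: "nat \<Rightarrow> 'a \<Rightarrow> real"
  assumes fm: "finite_measure M"
    and meas: "\<And>n. f n \<in> borel_measurable M"
    and bnd: "\<And>n x. x \<in> space M \<Longrightarrow> \<bar>f n x\<bar> \<le> C * \<rho>^n"
    and rho: "0 \<le> \<rho>" "\<rho> < 1"
  shows "(\<lambda>n. integral\<^sup>L M (f n)) sums integral\<^sup>L M (\<lambda>x. \<Sum>n. f n x)"
    and "integrable M (\<lambda>x. \<Sum>n. f n x)"
proof -
  interpret finite_measure M by (rule fm)
  have fi: "integrable M (f n)" for n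
    by (rule integrable_const_bound[where B="C * \<rho>^n"]) (use bnd meas in auto)
  have geo: "summable (\<lambda>n. C * \<rho>^n)" using rho by (intro summable_mult summable_geometric) auto
  have s1: "AE x in M. summable (\<lambda>n. norm (f n x))"
    by (intro AE_I2 summable_comparison_test'[OF geo]) (use bnd in auto)
  have geo2: "summable (\<lambda>n. C * \<rho>^n * measure M (space M))" by (intro summable_mult2 geo)
  have s2: "summable (\<lambda>n. LINT x|M. norm (f n x))"
  proof (rule summable_comparison_test'[OF geo2])
    fix n
    have "norm (LINT x|M. norm (f n x)) = (LINT x|M. norm (f n x))" by simp
    also have "\<dots> \<le> (LINT x|M. C * \<rho>^n)"
      using fi bnd by (intro integral_mono) auto
    also have "\<dots> = C * \<rho>^n * measure M (space M)" by simp
    finally show "norm (LINT x|M. norm (f n x)) \<le> C * \<rho>^n * measure M (space M)" .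
  qed
  show "(\<lambda>n. integral\<^sup>L M (f n)) sums integral\<^sup>L M (\<lambda>x. \<Sum>n. f n x)"
    by (rule sums_integral[OF fi s1 s2])
  show "integrable M (\<lambda>x. \<Sum>n. f n x)"
    by (rule integrable_suminf[OF fi s1 s2])
qed

lemma outside_q: assumes "z \<notin> E_int" shows "cmod (1 / phi z) < 1" "0 < cmod (phi z)"
  using phi_gt1[OF assms] by (auto simp: norm_divide divide_less_eq)

lemma outside_split:
  assumes "z \<notin> E_int"
  shows "ln (cmod (z - complex_of_real (cos x))) = ln (cmod (phi z)) - ln 2 +
           ln (cmod (1 - 2 * (1 / phi z) * complex_of_real (cos x) + (1 / phi z)^2))"
proof -
  define w where "w = phi z"
  have w0: "w \<noteq> 0" unfolding w_def by (rule phi_nz)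
  have zw: "z = (w + 1 / w) / 2" unfolding w_def by (simp add: phi_J)
  define Y where "Y = 1 - 2 * (1 / w) * complex_of_real (cos x) + (1 / w)^2"
  have e: "z - complex_of_real (cos x) = (w / 2) * Y"
    unfolding Y_def zw using w0 by (simp add: field_simps power2_eq_square)
  have Y0: "Y \<noteq> 0"
  proof
    assume "Y = 0"
    then have "z = complex_of_real (cos x)" using e by simp
    then have "z \<in> E_int" unfolding E_int_def by auto
    with assms show False by simp
  qed
  have "cmod (z - complex_of_real (cos x)) = (cmod w / 2) * cmod Y" unfolding e by (simp add: norm_mult norm_divide)
  then have "ln (cmod (z - complex_of_real (cos x))) = ln ((cmod w / 2) * cmod Y)" by (simp only:)
  also have "\<dots> = ln (cmod w / 2) + ln (cmod Y)" by (rule ln_mult_pos) (use w0 Y0 in auto)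
  finally have "ln (cmod (z - complex_of_real (cos x))) = ln (cmod w / 2) + ln (cmod Y)" .
  also have "\<dots> = ln (cmod w) - ln 2 + ln (cmod Y)" using w0 by (simp add: ln_div)
  finally show ?thesis unfolding Y_def w_def .
qed

lemma outside_series:
  assumes "z \<notin> E_int"
  shows "(\<lambda>n. 2 * cos (real n * x) * Re ((1 / phi z)^n) / real n) sums
           (ln (cmod (phi z)) - ln 2 - ln (cmod (z - complex_of_real (cos x))))"
  using master_series[OF outside_q(1)[OF assms], of x] unfolding outside_split[OF assms] by simp

lemma outside_term_bound:
  "\<bar>2 * cos (real n * x) * Re (q^n) / real n\<bar> \<le> 2 * (cmod q)^n"
proof (cases "n = 0")
  case True then show ?thesis by simp
next
  case False
  have "\<bar>2 * cos (real n * x) * Re (q^n) / real n\<bar> = 2 * \<bar>cos (real n * x)\<bar> * \<bar>Re (q^n)\<bar> / real n"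
    by (simp add: abs_mult)
  also have "\<dots> \<le> 2 * 1 * (cmod q)^n / 1"
    using False abs_Re_le_cmod[of "q^n"] by (intro divide_mono mult_mono) (auto simp: norm_power)
  finally show ?thesis by simp
qed

lemma outside_bound:
  assumes "z \<notin> E_int"
  shows "\<bar>ln (cmod (z - complex_of_real (cos x)))\<bar> \<le> \<bar>ln (cmod (phi z))\<bar> + ln 2 + 2 / (1 - cmod (1 / phi z))"
proof -
  define q where "q = 1 / phi z"
  have q: "cmod q < 1" unfolding q_def by (rule outside_q[OF assms])
  note s = outside_series[OF assms, of x]
  have g: "(\<lambda>n. 2 * (cmod q)^n) sums (2 * (1 / (1 - cmod q)))"
    using q by (intro sums_mult geometric_sums) auto
  have "\<bar>ln (cmod (phi z)) - ln 2 - ln (cmod (z - complex_of_real (cos x)))\<bar> \<le> 2 * (1 / (1 - cmod q))"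
    using norm_suminf_le[of "\<lambda>n. 2 * cos (real n * x) * Re (q^n) / real n" "\<lambda>n. 2 * (cmod q)^n"]
      outside_term_bound[where x=x and q=q] g s unfolding q_def[symmetric]
    by (auto simp: sums_iff)
  then show ?thesis using abs_ge_self[of "ln (cmod (phi z))"] abs_ge_minus_self[of "ln (cmod (phi z))"] ln_gt_zero[of 2]
    unfolding q_def abs_le_iff by linarith
qed

lemma outside_P_integral:
  assumes z: "z \<notin> E_int"
  shows "integrable P (\<lambda>x. ln (cmod (z - complex_of_real (cos x))) * cos (real m * x))"
    and "integral\<^sup>L P (\<lambda>x. ln (cmod (z - complex_of_real (cos x))) * cos (real m * x)) =
          (if m = 0 then ln (cmod (phi z)) - ln 2 else - Re ((1 / phi z)^m) / real m)"
proof -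
  define q where "q = 1 / phi z"
  define A where "A = ln (cmod (phi z)) - ln 2"
  have q: "cmod q < 1" unfolding q_def by (rule outside_q[OF z])
  define f where "f n x = 2 * cos (real n * x) * Re (q^n) / real n * cos (real m * x)" for n x
  have feq: "f n = (\<lambda>x. (2 * Re (q^n) / real n) * (cos (real n * x) * cos (real m * x)))" for n
    unfolding f_def by (auto simp: fun_eq_iff)
  have fm: "f n \<in> borel_measurable P" for n unfolding feq by simp
  have fb: "\<bar>f n x\<bar> \<le> 2 * (cmod q)^n" for n x
  proof -
    have "\<bar>f n x\<bar> = \<bar>2 * cos (real n * x) * Re (q^n) / real n\<bar> * \<bar>cos (real m * x)\<bar>"
      unfolding f_def by (simp add: abs_mult)
    also have "\<dots> \<le> 2 * (cmod q)^n * 1"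
      by (intro mult_mono outside_term_bound) auto
    finally show ?thesis by simp
  qed
  note SI = series_integral_fm[of P f 2 "cmod q", OF P.finite_measure_axioms fm fb norm_ge_zero q]
  have sf: "(\<Sum>n. f n x) = (A - ln (cmod (z - complex_of_real (cos x)))) * cos (real m * x)" for x
    using sums_mult2[OF outside_series[OF z, of x], of "cos (real m * x)"]
    unfolding f_def q_def A_def by (simp add: sums_iff)
  have intf: "integral\<^sup>L P (f n) = (if n = m then Re (q^m) / real m else 0)" for n
  proof -
    have "integral\<^sup>L P (f n) = 2 * Re (q^n) / real n * integral\<^sup>L P (\<lambda>x. cos (real n * x) * cos (real m * x))"
      unfolding feq by simp
    then show ?thesis unfolding integral_P_cos_cos by auto
  qed
  have e1: "integral\<^sup>L P (\<lambda>x. (A - ln (cmod (z - complex_of_real (cos x)))) * cos (real m * x)) = Re (q^m) / real m"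
    using SI(1) sums_single[of m "\<lambda>_. Re (q^m) / real m"] unfolding intf sf
    by (rule sums_unique2)
  have i1: "integrable P (\<lambda>x. (A - ln (cmod (z - complex_of_real (cos x)))) * cos (real m * x))"
    using SI(2) unfolding sf .
  have ic: "integrable P (\<lambda>x. A * cos (real m * x))" by (intro integrable_P_contU continuous_intros)
  have eq: "(\<lambda>x. ln (cmod (z - complex_of_real (cos x))) * cos (real m * x)) =
      (\<lambda>x. A * cos (real m * x) - (A - ln (cmod (z - complex_of_real (cos x)))) * cos (real m * x))"
    by (auto simp: fun_eq_iff algebra_simps)
  show "integrable P (\<lambda>x. ln (cmod (z - complex_of_real (cos x))) * cos (real m * x))"
    unfolding eq using ic i1 by simp
  have "integral\<^sup>L P (\<lambda>x. ln (cmod (z - complex_of_real (cos x))) * cos (real m * x)) =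
        A * integral\<^sup>L P (\<lambda>x. cos (real m * x)) - Re (q^m) / real m"
    unfolding eq using ic i1 e1 by simp
  then show "integral\<^sup>L P (\<lambda>x. ln (cmod (z - complex_of_real (cos x))) * cos (real m * x)) =
          (if m = 0 then ln (cmod (phi z)) - ln 2 else - Re ((1 / phi z)^m) / real m)"
    unfolding integral_P_cos A_def q_def by auto
qed

definition ac :: "complex \<Rightarrow> real" where "ac t = arccos (max (-1) (min 1 (Re t)))"
definition Tc :: "nat \<Rightarrow> complex \<Rightarrow> real" where "Tc n t = cos (real n * ac t)"

lemma ac_cont: "continuous_on UNIV ac"
  unfolding ac_def[abs_def] by (intro continuous_intros) auto

lemma ac_meas[measurable]: "ac \<in> borel_measurable borel"
  using ac_cont by (rule borel_measurable_continuous_onI)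

lemma Tc_meas[measurable]: "Tc n \<in> borel_measurable borel"
  unfolding Tc_def[abs_def] by measurable

lemma ac_E: "t \<in> E_int \<Longrightarrow> complex_of_real (cos (ac t)) = t"
  unfolding E_int_def ac_def by auto

lemma Tc_bound: "\<bar>Tc n t\<bar> \<le> 1" unfolding Tc_def by simp

lemma sigma_outside:
  assumes fm: "finite_measure \<sigma>" and sets: "sets \<sigma> = sets borel"
    and AE: "AE t in \<sigma>. t \<in> E_int" and z: "z \<notin> E_int"
  shows "integrable \<sigma> (\<lambda>t. ln (cmod (z - t)))"
    and "(\<lambda>n. 2 * Re ((1 / phi z)^n) / real n * integral\<^sup>L \<sigma> (Tc n)) sums
          ((ln (cmod (phi z)) - ln 2) * measure \<sigma> (space \<sigma>) - integral\<^sup>L \<sigma> (\<lambda>t. ln (cmod (z - t))))"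
proof -
  interpret finite_measure \<sigma> by (rule fm)
  note [measurable_cong] = sets
  define q where "q = 1 / phi z"
  define A where "A = ln (cmod (phi z)) - ln 2"
  have q: "cmod q < 1" unfolding q_def by (rule outside_q[OF z])
  define f where "f n t = 2 * cos (real n * ac t) * Re (q^n) / real n" for n t
  have fmeas: "f n \<in> borel_measurable \<sigma>" for n unfolding f_def by measurable
  have fb: "\<bar>f n t\<bar> \<le> 2 * (cmod q)^n" for n t unfolding f_def by (rule outside_term_bound)
  note SI = series_integral_fm[of \<sigma> f 2 "cmod q", OF fm fmeas fb norm_ge_zero q]
  have sf: "(\<Sum>n. f n t) = A - ln (cmod (z - complex_of_real (cos (ac t))))" for t
    using outside_series[OF z, of "ac t"] unfolding f_def q_def A_def by (simp add: sums_iff)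
  have sm: "(\<lambda>t. \<Sum>n. f n t) \<in> borel_measurable \<sigma>" unfolding sf by measurable
  have AEeq: "AE t in \<sigma>. (\<Sum>n. f n t) = A - ln (cmod (z - t))"
    using AE by eventually_elim (simp add: sf ac_E)
  have i1: "integrable \<sigma> (\<lambda>t. A - ln (cmod (z - t)))"
    using SI(2) by (rule integrable_cong_AE_imp) (use AEeq in \<open>auto elim: eventually_mono\<close>)
  show il: "integrable \<sigma> (\<lambda>t. ln (cmod (z - t)))"
  proof -
    have "integrable \<sigma> (\<lambda>t. A - (A - ln (cmod (z - t))))"
      using i1 by (rule Bochner_Integration.integrable_diff[rotated]) simp
    then show ?thesis by simp
  qed
  have "integral\<^sup>L \<sigma> (\<lambda>t. \<Sum>n. f n t) = integral\<^sup>L \<sigma> (\<lambda>t. A - ln (cmod (z - t)))"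
    by (rule integral_cong_AE) (use AEeq sm in auto)
  also have "\<dots> = A * measure \<sigma> (space \<sigma>) - integral\<^sup>L \<sigma> (\<lambda>t. ln (cmod (z - t)))"
    using il by simp
  finally have e: "integral\<^sup>L \<sigma> (\<lambda>t. \<Sum>n. f n t) = A * measure \<sigma> (space \<sigma>) - integral\<^sup>L \<sigma> (\<lambda>t. ln (cmod (z - t)))" .
  have intf: "integral\<^sup>L \<sigma> (f n) = 2 * Re (q^n) / real n * integral\<^sup>L \<sigma> (Tc n)" for n
  proof -
    have "f n = (\<lambda>t. 2 * Re (q^n) / real n * Tc n t)" unfolding f_def Tc_def by (auto simp: fun_eq_iff)
    then show ?thesis by simp
  qed
  show "(\<lambda>n. 2 * Re ((1 / phi z)^n) / real n * integral\<^sup>L \<sigma> (Tc n)) sums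
          ((ln (cmod (phi z)) - ln 2) * measure \<sigma> (space \<sigma>) - integral\<^sup>L \<sigma> (\<lambda>t. ln (cmod (z - t))))"
    using SI(1) unfolding intf e q_def A_def .
qed


context
  fixes M N :: "'a measure"
  assumes sN: "sets N = sets M"
begin

lemma space_N: "space N = space M" using sets_eq_imp_space_eq[OF sN] .

lemma sets_measure_add[simp, measurable_cong]: "sets (measure_add M N) = sets M"
  unfolding measure_add_def by (simp add: sets.space_closed sets.sigma_sets_eq)

lemma space_measure_add[simp]: "space (measure_add M N) = space M"
  unfolding measure_add_def by simp

lemma bm_N: "borel_measurable N = borel_measurable M"
  by (rule measurable_cong_sets[OF sN]) simp

lemma bm_A: "borel_measurable (measure_add M N) = borel_measurable M"
  by (rule measurable_cong_sets) simp_all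

lemma emeasure_measure_add: "A \<in> sets M \<Longrightarrow> emeasure (measure_add M N) A = emeasure M A + emeasure N A"
  unfolding measure_add_def
proof (rule emeasure_measure_of_sigma)
  show "sigma_algebra (space M) (sets M)" by (rule sets.sigma_algebra_axioms)
  show "positive (sets M) (\<lambda>A. emeasure M A + emeasure N A)" by (simp add: positive_def)
  show "countably_additive (sets M) (\<lambda>A. emeasure M A + emeasure N A)"
    unfolding countably_additive_def
  proof safe
    fix A :: "nat \<Rightarrow> 'a set" assume A: "range A \<subseteq> sets M" "disjoint_family A" "\<Union> (range A) \<in> sets M"
    have "(\<Sum>i. emeasure M (A i) + emeasure N (A i)) = (\<Sum>i. emeasure M (A i)) + (\<Sum>i. emeasure N (A i))"
      by (rule suminf_add[symmetric]) auto
    also have "\<dots> = emeasure M (\<Union>i. A i) + emeasure N (\<Union>i. A i)"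
      using A sN by (simp add: suminf_emeasure)
    finally show "(\<Sum>i. emeasure M (A i) + emeasure N (A i)) = emeasure M (\<Union> (range A)) + emeasure N (\<Union> (range A))" .
  qed
qed

lemma nn_integral_measure_add:
  assumes f: "f \<in> borel_measurable M"
  shows "integral\<^sup>N (measure_add M N) f = integral\<^sup>N M f + integral\<^sup>N N f"
  using f
proof (induct rule: borel_measurable_induct)
  case (cong f g)
  have "integral\<^sup>N (measure_add M N) f = integral\<^sup>N (measure_add M N) g"
    using cong by (intro nn_integral_cong) simp
  moreover have "integral\<^sup>N M f = integral\<^sup>N M g" using cong by (intro nn_integral_cong) simp
  moreover have "integral\<^sup>N N f = integral\<^sup>N N g" using cong space_N by (intro nn_integral_cong) simp
  ultimately show ?case using cong by simp
next
  case (set A)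
  then show ?case using sN by (simp add: emeasure_measure_add)
next
  case (mult u c)
  have mN: "u \<in> borel_measurable N" unfolding bm_N using mult by simp
  have mA: "u \<in> borel_measurable (measure_add M N)" unfolding bm_A using mult by simp
  show ?case using mult mN mA by (simp add: nn_integral_cmult distrib_left)
next
  case (add u v)
  have mN: "u \<in> borel_measurable N" "v \<in> borel_measurable N" unfolding bm_N using add by auto
  have mA: "u \<in> borel_measurable (measure_add M N)" "v \<in> borel_measurable (measure_add M N)"
    unfolding bm_A using add by auto
  show ?case using add mN mA by (simp add: nn_integral_add algebra_simps)
next
  case (seq U)
  have mN: "U i \<in> borel_measurable N" for i unfolding bm_N using seq by auto
  have mA: "U i \<in> borel_measurable (measure_add M N)" for i
    unfolding bm_A using seq by auto
  have Ueq: "(\<Squnion> range U) = (\<lambda>x. SUP i. U i x)" by (auto simp: fun_eq_iff image_comp)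
  have "integral\<^sup>N (measure_add M N) (\<Squnion> range U) = (SUP i. integral\<^sup>N (measure_add M N) (U i))"
    unfolding Ueq using seq mA by (intro nn_integral_monotone_convergence_SUP) auto
  also have "\<dots> = (SUP i. integral\<^sup>N M (U i) + integral\<^sup>N N (U i))" using seq by simp
  also have "\<dots> = (SUP i. integral\<^sup>N M (U i)) + (SUP i. integral\<^sup>N N (U i))"
    using seq mN by (intro ennreal_SUP_add) (auto intro!: nn_integral_mono simp: incseq_def le_fun_def)
  also have "\<dots> = integral\<^sup>N M (\<Squnion> range U) + integral\<^sup>N N (\<Squnion> range U)"
    unfolding Ueq using seq mN by (simp add: nn_integral_monotone_convergence_SUP)
  finally show ?case .
qed

lemma integral_measure_add:
  fixes f :: "'a \<Rightarrow> real"
  assumes iM: "integrable M f" and iN: "integrable N f"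
  shows "integrable (measure_add M N) f"
    and "integral\<^sup>L (measure_add M N) f = integral\<^sup>L M f + integral\<^sup>L N f"
proof -
  have fm[measurable]: "f \<in> borel_measurable M" using iM by simp
  have fA: "f \<in> borel_measurable (measure_add M N)" unfolding bm_A using fm by simp
  have fN: "f \<in> borel_measurable N" unfolding bm_N using fm by simp
  have nnM: "(\<integral>\<^sup>+x. ennreal (norm (f x)) \<partial>M) < \<infinity>" using iM by (simp add: integrable_iff_bounded)
  have nnN: "(\<integral>\<^sup>+x. ennreal (norm (f x)) \<partial>N) < \<infinity>" using iN by (simp add: integrable_iff_bounded)
  show iA: "integrable (measure_add M N) f"
    unfolding integrable_iff_bounded using fA nnM nnN
    by (simp add: nn_integral_measure_add)
  have "(\<integral>\<^sup>+x. ennreal (f x) \<partial>M) \<le> (\<integral>\<^sup>+x. ennreal (norm (f x)) \<partial>M)"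
    "(\<integral>\<^sup>+x. ennreal (- f x) \<partial>M) \<le> (\<integral>\<^sup>+x. ennreal (norm (f x)) \<partial>M)"
    by (intro nn_integral_mono ennreal_leI; simp)+
  then have pM: "(\<integral>\<^sup>+x. ennreal (f x) \<partial>M) < \<infinity>" "(\<integral>\<^sup>+x. ennreal (- f x) \<partial>M) < \<infinity>"
    using nnM by (auto dest: le_less_trans)
  have "(\<integral>\<^sup>+x. ennreal (f x) \<partial>N) \<le> (\<integral>\<^sup>+x. ennreal (norm (f x)) \<partial>N)"
    "(\<integral>\<^sup>+x. ennreal (- f x) \<partial>N) \<le> (\<integral>\<^sup>+x. ennreal (norm (f x)) \<partial>N)"
    by (intro nn_integral_mono ennreal_leI; simp)+
  then have pN: "(\<integral>\<^sup>+x. ennreal (f x) \<partial>N) < \<infinity>" "(\<integral>\<^sup>+x. ennreal (- f x) \<partial>N) < \<infinity>"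
    using nnN by (auto dest: le_less_trans)
  show "integral\<^sup>L (measure_add M N) f = integral\<^sup>L M f + integral\<^sup>L N f"
    unfolding real_lebesgue_integral_def[OF iA] real_lebesgue_integral_def[OF iM] real_lebesgue_integral_def[OF iN]
    using pM pN by (simp add: nn_integral_measure_add enn2real_plus)
qed

end


lemma fubini_P:
  fixes g :: "complex \<Rightarrow> real \<Rightarrow> real"
  assumes fm: "finite_measure \<sigma>" and sets[measurable_cong]: "sets \<sigma> = sets borel"
    and gm[measurable]: "(\<lambda>(t, x). g t x) \<in> borel_measurable (borel \<Otimes>\<^sub>M borel)"
    and AEi: "AE t in \<sigma>. integrable P (g t)"
    and AEb: "AE t in \<sigma>. integral\<^sup>L P (\<lambda>x. \<bar>g t x\<bar>) \<le> K"
  shows "integrable P (\<lambda>x. \<integral>t. g t x \<partial>\<sigma>)"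
    and "integral\<^sup>L P (\<lambda>x. \<integral>t. g t x \<partial>\<sigma>) = (\<integral>t. integral\<^sup>L P (g t) \<partial>\<sigma>)"
proof -
  interpret S: finite_measure \<sigma> by (rule fm)
  interpret pair_sigma_finite \<sigma> P ..
  have gm2: "(\<lambda>(t, x). g t x) \<in> borel_measurable (\<sigma> \<Otimes>\<^sub>M P)"
  proof -
    have "sets (\<sigma> \<Otimes>\<^sub>M P) = sets (borel \<Otimes>\<^sub>M borel)" by (intro sets_pair_measure_cong) (simp_all add: sets)
    then have eqm: "borel_measurable (\<sigma> \<Otimes>\<^sub>M P) = borel_measurable (borel \<Otimes>\<^sub>M borel)"
      by (rule measurable_cong_sets) simp
    show ?thesis by (subst eqm) (rule gm)
  qed
  have int: "integrable (\<sigma> \<Otimes>\<^sub>M P) (\<lambda>(t, x). g t x)"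
  proof (rule Fubini_integrable)
    show "(\<lambda>(t, x). g t x) \<in> borel_measurable (\<sigma> \<Otimes>\<^sub>M P)" by (rule gm2)
    have nm: "(\<lambda>t. \<integral>x. norm (case (t, x) of (t, x) \<Rightarrow> g t x) \<partial>P) \<in> borel_measurable \<sigma>"
      using gm2 by measurable
    show "integrable \<sigma> (\<lambda>t. \<integral>x. norm (case (t, x) of (t, x) \<Rightarrow> g t x) \<partial>P)"
    proof (rule S.integrable_const_bound[where B=K])
      show "AE t in \<sigma>. norm (\<integral>x. norm (case (t, x) of (t, x) \<Rightarrow> g t x) \<partial>P) \<le> K"
        using AEb by eventually_elim simp
    qed (rule nm)
    show "AE t in \<sigma>. integrable P (\<lambda>x. case (t, x) of (t, x) \<Rightarrow> g t x)"
      using AEi by simp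
  qed
  show "integrable P (\<lambda>x. \<integral>t. g t x \<partial>\<sigma>)"
    using integrable_snd[of g] int by simp
  show "integral\<^sup>L P (\<lambda>x. \<integral>t. g t x \<partial>\<sigma>) = (\<integral>t. integral\<^sup>L P (g t) \<partial>\<sigma>)"
    using Fubini_integral[of g] int by simp
qed


lemma E_int_closed: "closed E_int"
proof -
  have "compact E_int" unfolding E_int_def by (intro compact_continuous_image continuous_intros) auto
  then show ?thesis by (rule compact_imp_closed)
qed

lemma E_int_sets[measurable]: "E_int \<in> sets borel"
  using E_int_closed by (rule borel_closed)

lemma phi_ge1': "cmod (1 / phi z) \<le> 1"
  using phi_ge1[of z] by (simp add: norm_divide divide_le_eq)

lemma F_point:
  fixes r :: real
  assumes r: "1 + d \<le> \<bar>r\<bar>" "\<bar>r\<bar> \<le> M" and d: "0 < d"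
  shows "complex_of_real r \<notin> E_int"
    and "cmod (1 / phi (complex_of_real r)) \<le> 1 / (1 + d)"
    and "cmod (phi (complex_of_real r)) \<le> 2 * M"
    and "1 / phi (complex_of_real r) = complex_of_real (Re (1 / phi (complex_of_real r)))"
proof -
  have r1: "1 < \<bar>r\<bar>" using r d by simp
  show "complex_of_real r \<notin> E_int" using r1 unfolding E_int_def by auto
  define s where "s = r + sgn r * sqrt (r^2 - 1)"
  have ps: "phi (complex_of_real r) = complex_of_real s" unfolding s_def by (rule phi_real[OF r1])
  have r2: "1 \<le> r^2"
  proof -
    have "1 * 1 \<le> \<bar>r\<bar> * \<bar>r\<bar>" using r1 by (intro mult_mono) auto
    then show ?thesis by (simp add: power2_eq_square)
  qed
  have sq: "0 \<le> sqrt (r^2 - 1)" "sqrt (r^2 - 1) \<le> \<bar>r\<bar>"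
    using r2 by (auto intro!: real_le_lsqrt)
  have as: "\<bar>s\<bar> = \<bar>r\<bar> + sqrt (r^2 - 1)"
  proof (cases "r > 0")
    case True
    then have "s = r + sqrt (r^2 - 1)" unfolding s_def by simp
    then show ?thesis using True sq(1) by simp
  next
    case False
    then have "r < 0" using r1 by auto
    then have "s = r - sqrt (r^2 - 1)" unfolding s_def by simp
    moreover have "r - sqrt (r^2 - 1) < 0" using \<open>r < 0\<close> sq(1) by linarith
    ultimately show ?thesis using \<open>r < 0\<close> by simp
  qed
  show "cmod (1 / phi (complex_of_real r)) \<le> 1 / (1 + d)"
  proof -
    have "1 + d \<le> \<bar>s\<bar>" using as sq r by linarith
    then have "1 / \<bar>s\<bar> \<le> 1 / (1 + d)" using d by (intro divide_left_mono) auto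
    then show ?thesis unfolding ps by (simp add: norm_divide)
  qed
  show "cmod (phi (complex_of_real r)) \<le> 2 * M" unfolding ps using as sq r by simp
  show "1 / phi (complex_of_real r) = complex_of_real (Re (1 / phi (complex_of_real r)))"
    unfolding ps by simp
qed

lemma ln_series_Re:
  assumes u: "cmod u < 1"
  shows "(\<lambda>n. Re (u^n) / real n) sums (- ln (cmod (1 - u)))"
proof -
  have "cmod (- u) < 1" using u by simp
  from Ln_series'[OF this] have "(\<lambda>n. - (u^n) / of_nat n) sums Ln (1 - u)" by simp
  from sums_Re[OF this] have "(\<lambda>n. - (Re (u^n) / real n)) sums Re (Ln (1 - u))"
    by (simp add: Re_divide_of_nat)
  moreover have "1 - u \<noteq> 0" using u by auto
  ultimately have "(\<lambda>n. - (Re (u^n) / real n)) sums ln (cmod (1 - u))" by (simp add: Re_Ln)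
  from sums_minus[OF this] show ?thesis by simp
qed

lemma log_potential_neg: "log_potential \<sigma> z = - (\<integral>t. ln (cmod (z - t)) \<partial>\<sigma>)"
  unfolding log_potential_def by (simp add: ln_inverse flip: inverse_eq_divide)


lemma moment_eq:
  fixes F :: "real set" and \<mu> \<nu> :: "complex measure" and d M c :: real
  assumes mu: "prob_space \<mu>" and mus[measurable_cong]: "sets \<mu> = sets borel"
    and muF: "AE t in \<mu>. t \<in> complex_of_real ` F"
    and FB: "\<forall>r\<in>F. 1 + d \<le> \<bar>r\<bar> \<and> \<bar>r\<bar> \<le> M" and d: "0 < d"
    and nu: "finite_measure \<nu>" and nus[measurable_cong]: "sets \<nu> = sets borel"
    and nuE: "AE t in \<nu>. t \<in> E_int"
    and pot: "\<forall>x\<in>E_int. log_potential \<nu> x = log_potential \<mu> x + c"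
    and m: "m \<noteq> 0"
  shows "integral\<^sup>L \<nu> (Tc m) = (\<integral>t. Re ((1 / phi t)^m) \<partial>\<mu>)"
proof -
  interpret mu: prob_space \<mu> by (rule mu)
  define g where "g t x = ln (cmod (complex_of_real (cos x) - t)) * cos (real m * x)" for t x
  have gm: "(\<lambda>(t, x). g t x) \<in> borel_measurable (borel \<Otimes>\<^sub>M borel)"
    unfolding g_def by measurable
  have gP: "(\<lambda>t. integral\<^sup>L P (g t)) \<in> borel_measurable borel"
    using gm by (intro P.borel_measurable_lebesgue_integral) simp
  have gE: "g t = (\<lambda>x. ln \<bar>cos x - cos (ac t)\<bar> * cos (real m * x))" if t: "t \<in> E_int" for t
  proof -
    have "complex_of_real (cos x) - t = complex_of_real (cos x - cos (ac t))" for x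
      using ac_E[OF t] by simp
    then show ?thesis unfolding g_def by (simp only: norm_of_real)
  qed
  have intE: "integrable P (g t)" if t: "t \<in> E_int" for t
    unfolding gE[OF t]
    by (rule Bochner_Integration.integrable_bound[OF lnabs_integrable[of "ac t"]])
       (auto simp: abs_mult mult_left_le)
  have bndE: "integral\<^sup>L P (\<lambda>x. \<bar>g t x\<bar>) \<le> 2 * ln 4 + ln 2" if t: "t \<in> E_int" for t
  proof -
    have i1: "integrable P (\<lambda>x. \<bar>g t x\<bar>)" using intE[OF t] by (rule integrable_abs)
    have i2: "integrable P (\<lambda>x. \<bar>ln \<bar>cos x - cos (ac t)\<bar>\<bar>)" using lnabs_integrable by (rule integrable_abs)
    have "integral\<^sup>L P (\<lambda>x. \<bar>g t x\<bar>) \<le> integral\<^sup>L P (\<lambda>x. \<bar>ln \<bar>cos x - cos (ac t)\<bar>\<bar>)"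
      using i1 i2 by (intro integral_mono) (auto simp: gE[OF t] abs_mult mult_left_le)
    also have "\<dots> \<le> 2 * ln 4 + ln 2" by (rule lnabs_abs_integral)
    finally show ?thesis .
  qed
  have valE: "integral\<^sup>L P (g t) = - Tc m t / real m" if t: "t \<in> E_int" for t
    unfolding gE[OF t] lnabs_cos_integral[OF m] Tc_def by (simp add: mult.commute)
  have gF: "g t = (\<lambda>x. ln (cmod (t - complex_of_real (cos x))) * cos (real m * x))" for t
    unfolding g_def by (simp add: norm_minus_commute)
  define KF where "KF = ln (2 * M) + ln 2 + 2 / (1 - 1 / (1 + d))"
  have Fpt: "t \<notin> E_int \<and> cmod (1 / phi t) \<le> 1 / (1 + d) \<and> cmod (phi t) \<le> 2 * M"
    if t: "t \<in> complex_of_real ` F" for t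
  proof -
    obtain r where r: "r \<in> F" "t = complex_of_real r" using t by auto
    show ?thesis unfolding r(2) using F_point[of d r M] FB r(1) d by auto
  qed
  have intF: "integrable P (g t)" if t: "t \<in> complex_of_real ` F" for t
    unfolding gF using outside_P_integral(1)[of t m] Fpt[OF t] by simp
  have valF: "integral\<^sup>L P (g t) = - Re ((1 / phi t)^m) / real m" if t: "t \<in> complex_of_real ` F" for t
    unfolding gF using outside_P_integral(2)[of t m] Fpt[OF t] m by simp
  have bndF: "integral\<^sup>L P (\<lambda>x. \<bar>g t x\<bar>) \<le> KF" if t: "t \<in> complex_of_real ` F" for t
  proof -
    have tE: "t \<notin> E_int" and q: "cmod (1 / phi t) \<le> 1 / (1 + d)" and p: "cmod (phi t) \<le> 2 * M"
      using Fpt[OF t] by auto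
    have p1: "1 < cmod (phi t)" by (rule phi_gt1[OF tE])
    have "ln (cmod (phi t)) \<le> ln (2 * M)" using p1 p by (intro ln_mono) auto
    moreover have "0 \<le> ln (cmod (phi t))" using p1 by simp
    ultimately have lp: "\<bar>ln (cmod (phi t))\<bar> \<le> ln (2 * M)" by simp
    have qq: "2 / (1 - cmod (1 / phi t)) \<le> 2 / (1 - 1 / (1 + d))"
    proof -
      have "1 / (1 + d) < 1" using d by simp
      then show ?thesis using q by (intro divide_left_mono mult_pos_pos) auto
    qed
    have pt: "\<bar>g t x\<bar> \<le> KF" for x
    proof -
      have "\<bar>g t x\<bar> \<le> \<bar>ln (cmod (t - complex_of_real (cos x)))\<bar> * 1"
        unfolding gF by (simp add: abs_mult mult_left_le)
      also have "\<dots> \<le> \<bar>ln (cmod (phi t))\<bar> + ln 2 + 2 / (1 - cmod (1 / phi t))"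
        using outside_bound[OF tE, of x] by simp
      also have "\<dots> \<le> KF" unfolding KF_def using lp qq by linarith
      finally show ?thesis .
    qed
    have "integral\<^sup>L P (\<lambda>x. \<bar>g t x\<bar>) \<le> integral\<^sup>L P (\<lambda>x. KF)"
      using intF[OF t] pt by (intro integral_mono) auto
    also have "\<dots> = KF" using P.prob_space by simp
    finally show ?thesis .
  qed
  note FN = fubini_P[OF nu nus gm, where K="2 * ln 4 + ln 2"]
  have a1: "AE t in \<nu>. integrable P (g t)" using nuE by eventually_elim (rule intE)
  have a2: "AE t in \<nu>. integral\<^sup>L P (\<lambda>x. \<bar>g t x\<bar>) \<le> 2 * ln 4 + ln 2" using nuE by eventually_elim (rule bndE)
  have FN1: "integral\<^sup>L P (\<lambda>x. \<integral>t. g t x \<partial>\<nu>) = (\<integral>t. integral\<^sup>L P (g t) \<partial>\<nu>)"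
    by (rule FN(2)[OF a1 a2])
  note FM = fubini_P[OF mu.finite_measure_axioms mus gm, where K=KF]
  have b1: "AE t in \<mu>. integrable P (g t)" using muF by eventually_elim (rule intF)
  have b2: "AE t in \<mu>. integral\<^sup>L P (\<lambda>x. \<bar>g t x\<bar>) \<le> KF" using muF by eventually_elim (rule bndF)
  have FM0: "integrable P (\<lambda>x. \<integral>t. g t x \<partial>\<mu>)" by (rule FM(1)[OF b1 b2])
  have FM1: "integral\<^sup>L P (\<lambda>x. \<integral>t. g t x \<partial>\<mu>) = (\<integral>t. integral\<^sup>L P (g t) \<partial>\<mu>)"
    by (rule FM(2)[OF b1 b2])
  have RN: "(\<integral>t. integral\<^sup>L P (g t) \<partial>\<nu>) = - integral\<^sup>L \<nu> (Tc m) / real m"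
  proof -
    have "(\<integral>t. integral\<^sup>L P (g t) \<partial>\<nu>) = (\<integral>t. - Tc m t / real m \<partial>\<nu>)"
      by (rule integral_cong_AE) (use gP nuE valE in \<open>auto elim: eventually_mono\<close>)
    then show ?thesis by simp
  qed
  have RM: "(\<integral>t. integral\<^sup>L P (g t) \<partial>\<mu>) = - (\<integral>t. Re ((1 / phi t)^m) \<partial>\<mu>) / real m"
  proof -
    have "(\<integral>t. integral\<^sup>L P (g t) \<partial>\<mu>) = (\<integral>t. - Re ((1 / phi t)^m) / real m \<partial>\<mu>)"
      by (rule integral_cong_AE) (use gP muF valF in \<open>auto elim: eventually_mono\<close>)
    then show ?thesis by simp
  qed
  have inner: "(\<integral>t. g t x \<partial>\<nu>) = (\<integral>t. g t x \<partial>\<mu>) - c * cos (real m * x)" for x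
  proof -
    have xE: "complex_of_real (cos x) \<in> E_int" unfolding E_int_def by auto
    have "(\<integral>t. g t x \<partial>\<nu>) = - log_potential \<nu> (complex_of_real (cos x)) * cos (real m * x)"
      unfolding g_def log_potential_neg by simp
    also have "\<dots> = - (log_potential \<mu> (complex_of_real (cos x)) + c) * cos (real m * x)"
      using pot xE by simp
    also have "\<dots> = (\<integral>t. g t x \<partial>\<mu>) - c * cos (real m * x)"
      unfolding g_def log_potential_neg by (simp add: algebra_simps)
    finally show ?thesis .
  qed
  have ic: "integrable P (\<lambda>x. c * cos (real m * x))" by (intro integrable_P_contU continuous_intros)
  have "integral\<^sup>L P (\<lambda>x. \<integral>t. g t x \<partial>\<nu>) = integral\<^sup>L P (\<lambda>x. \<integral>t. g t x \<partial>\<mu>) - c * integral\<^sup>L P (\<lambda>x. cos (real m * x))"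
    unfolding inner using FM0 ic by simp
  also have "\<dots> = integral\<^sup>L P (\<lambda>x. \<integral>t. g t x \<partial>\<mu>)" using m by (simp add: integral_P_cos)
  finally have "- integral\<^sup>L \<nu> (Tc m) / real m = - (\<integral>t. Re ((1 / phi t)^m) \<partial>\<mu>) / real m"
    using FN1 FM1 RN RM by simp
  then show ?thesis using m by simp
qed


lemma sets_tau[simp, measurable_cong]: "sets tau_E = sets borel"
  unfolding tau_E_def by simp

lemma tau_potential:
  assumes z: "z \<notin> E_int"
  shows "integrable tau_E (\<lambda>t. ln (1 / cmod (z - t)))"
    and "log_potential tau_E z = - (ln (cmod (phi z)) - ln 2)"
proof -
  have gm: "(\<lambda>x. complex_of_real (cos x)) \<in> P \<rightarrow>\<^sub>M borel" by simp
  have i0: "integrable P (\<lambda>x. ln (cmod (z - complex_of_real (cos x))))"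
    using outside_P_integral(1)[OF z, of 0] by simp
  have v0: "integral\<^sup>L P (\<lambda>x. ln (cmod (z - complex_of_real (cos x)))) = ln (cmod (phi z)) - ln 2"
    using outside_P_integral(2)[OF z, of 0] by simp
  have "integrable P (\<lambda>x. ln (1 / cmod (z - complex_of_real (cos x))))"
    using i0 by (simp add: ln_inverse flip: inverse_eq_divide)
  then show "integrable tau_E (\<lambda>t. ln (1 / cmod (z - t)))"
    unfolding tau_eq by (subst integrable_distr_eq[OF gm]) auto
  have "log_potential tau_E z = - integral\<^sup>L P (\<lambda>x. ln (cmod (z - complex_of_real (cos x))))"
    unfolding log_potential_neg tau_eq by (subst integral_distr[OF gm]) auto
  then show "log_potential tau_E z = - (ln (cmod (phi z)) - ln 2)" using v0 by simp
qed

lemma pointwise_identity: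
  fixes F :: "real set" and \<mu> \<nu> :: "complex measure" and d M :: real
  assumes mu: "prob_space \<mu>" and mus[measurable_cong]: "sets \<mu> = sets borel"
    and muF: "AE t in \<mu>. t \<in> complex_of_real ` F"
    and FB: "\<forall>r\<in>F. 1 + d \<le> \<bar>r\<bar> \<and> \<bar>r\<bar> \<le> M" and d: "0 < d"
    and nu: "finite_measure \<nu>" and nus[measurable_cong]: "sets \<nu> = sets borel"
    and nuE: "AE t in \<nu>. t \<in> E_int" and num: "measure \<nu> (space \<nu>) = 1"
    and pot: "\<forall>x\<in>E_int. log_potential \<nu> x = log_potential \<mu> x + c"
    and z: "z \<notin> E_int"
  shows "v_pot \<mu> z = - (1/2) * log_potential (measure_add \<nu> tau_E) z + (ln 2 + (\<integral>t. ln (cmod (phi t)) \<partial>\<mu>))"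
proof -
  interpret mu: prob_space \<mu> by (rule mu)
  define w where "w = phi z"
  define q where "q = 1 / w"
  define A where "A = ln (cmod w) - ln 2"
  define L where "L t = ln (cmod (1 - q * (1 / phi t)))" for t
  have q: "cmod q < 1" unfolding q_def w_def by (rule outside_q[OF z])
  have w1: "1 < cmod w" unfolding w_def by (rule phi_gt1[OF z])
  have Fpt: "t \<notin> E_int \<and> cmod (1 / phi t) \<le> 1 / (1 + d) \<and> cmod (phi t) \<le> 2 * M \<and>
       1 / phi t = complex_of_real (Re (1 / phi t))"
    if t: "t \<in> complex_of_real ` F" for t
  proof -
    obtain r where r: "r \<in> F" "t = complex_of_real r" using t by auto
    show ?thesis unfolding r(2) using F_point[of d r M] FB r(1) d by auto
  qed
  note SO = sigma_outside[OF nu nus nuE z]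
  have SN: "(\<lambda>n. 2 * Re (q^n) / real n * (\<integral>t. Re ((1 / phi t)^n) \<partial>\<mu>)) sums
       (A - integral\<^sup>L \<nu> (\<lambda>t. ln (cmod (z - t))))"
  proof -
    have tm: "2 * Re ((1 / phi z)^n) / real n * integral\<^sup>L \<nu> (Tc n) = 2 * Re ((1 / phi z)^n) / real n * (\<integral>t. Re ((1 / phi t)^n) \<partial>\<mu>)" for n
    proof (cases "n = 0")
      case True then show ?thesis by simp
    next
      case False
      show ?thesis using moment_eq[OF mu mus muF FB d nu nus nuE pot False] by simp
    qed
    from SO(2) have "(\<lambda>n. 2 * Re ((1 / phi z)^n) / real n * integral\<^sup>L \<nu> (Tc n)) sums
          ((ln (cmod (phi z)) - ln 2) * 1 - integral\<^sup>L \<nu> (\<lambda>t. ln (cmod (z - t))))" unfolding num .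
    then show ?thesis unfolding tm q_def w_def A_def by simp
  qed
  define f where "f n t = 2 * Re (q^n) / real n * Re ((1 / phi t)^n)" for n t
  have fmeas: "f n \<in> borel_measurable \<mu>" for n unfolding f_def by measurable
  have fb: "\<bar>f n t\<bar> \<le> 2 * (cmod q)^n" for n t
  proof -
    have "\<bar>2 * cos (real n * 0) * Re (q^n) / real n\<bar> \<le> 2 * (cmod q)^n" by (rule outside_term_bound)
    then have a: "\<bar>2 * Re (q^n) / real n\<bar> \<le> 2 * (cmod q)^n" by simp
    have "\<bar>Re ((1 / phi t)^n)\<bar> \<le> cmod ((1 / phi t)^n)" by (rule abs_Re_le_cmod)
    also have "\<dots> \<le> 1" unfolding norm_power using phi_ge1'[of t] by (simp add: power_le_one)
    finally have b: "\<bar>Re ((1 / phi t)^n)\<bar> \<le> 1" .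
    have "\<bar>f n t\<bar> = \<bar>2 * Re (q^n) / real n\<bar> * \<bar>Re ((1 / phi t)^n)\<bar>" unfolding f_def by (simp add: abs_mult)
    also have "\<dots> \<le> 2 * (cmod q)^n * 1" using a b by (intro mult_mono) auto
    finally show ?thesis by simp
  qed
  note SI = series_integral_fm[of \<mu> f 2 "cmod q", OF mu.finite_measure_axioms fmeas fb norm_ge_zero q]
  have intf: "integral\<^sup>L \<mu> (f n) = 2 * Re (q^n) / real n * (\<integral>t. Re ((1 / phi t)^n) \<partial>\<mu>)" for n
    unfolding f_def by simp
  have sumf: "(\<Sum>n. f n t) = - 2 * L t" if t: "t \<in> complex_of_real ` F" for t
  proof -
    define a where "a = Re (1 / phi t)"
    have qa: "1 / phi t = complex_of_real a" using Fpt[OF t] unfolding a_def by simp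
    have u: "cmod (q * complex_of_real a) < 1"
    proof -
      have "cmod (q * complex_of_real a) = cmod q * cmod (1 / phi t)" unfolding qa by (simp add: norm_mult)
      also have "\<dots> \<le> cmod q * 1" using phi_ge1'[of t] by (intro mult_left_mono) auto
      finally show ?thesis using q by simp
    qed
    have eq: "f n t = 2 * (Re ((q * complex_of_real a)^n) / real n)" for n
      unfolding f_def qa by (simp add: power_mult_distrib flip: of_real_power)
    have "(\<lambda>n. f n t) sums (2 * (- ln (cmod (1 - q * complex_of_real a))))"
      unfolding eq by (intro sums_mult ln_series_Re u)
    then show ?thesis unfolding L_def qa by (simp add: sums_iff)
  qed
  have Lm: "L \<in> borel_measurable \<mu>" unfolding L_def[abs_def] by measurable
  have sfm: "(\<lambda>t. \<Sum>n. f n t) \<in> borel_measurable \<mu>" using SI(2) by simp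
  have AEs: "AE t in \<mu>. (\<Sum>n. f n t) = - 2 * L t" using muF by eventually_elim (rule sumf)
  have IL2: "integrable \<mu> (\<lambda>t. - 2 * L t)"
    using SI(2) by (rule integrable_cong_AE_imp) (use AEs Lm in auto)
  have IL: "integrable \<mu> L" using IL2 by (simp add: integrable_mult_left_iff)
  have "(\<lambda>n. 2 * Re (q^n) / real n * (\<integral>t. Re ((1 / phi t)^n) \<partial>\<mu>)) sums integral\<^sup>L \<mu> (\<lambda>t. \<Sum>n. f n t)"
    using SI(1) unfolding intf .
  with SN have e1: "A - integral\<^sup>L \<nu> (\<lambda>t. ln (cmod (z - t))) = integral\<^sup>L \<mu> (\<lambda>t. \<Sum>n. f n t)"
    by (rule sums_unique2)
  also have "\<dots> = integral\<^sup>L \<mu> (\<lambda>t. - 2 * L t)"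
    by (rule integral_cong_AE) (use AEs Lm sfm in auto)
  also have "\<dots> = - 2 * integral\<^sup>L \<mu> L" by simp
  finally have NU: "integral\<^sup>L \<nu> (\<lambda>t. ln (cmod (z - t))) = A + 2 * integral\<^sup>L \<mu> L" by simp
  have inu: "integrable \<nu> (\<lambda>t. ln (1 / cmod (z - t)))"
    using SO(1) by (simp add: ln_inverse flip: inverse_eq_divide)
  have sets_eq: "sets tau_E = sets \<nu>" using nus by simp
  have LPA: "log_potential (measure_add \<nu> tau_E) z = log_potential \<nu> z + log_potential tau_E z"
    unfolding log_potential_def
    using integral_measure_add(2)[OF sets_eq inu tau_potential(1)[OF z]] .
  have LPN: "log_potential \<nu> z = - (A + 2 * integral\<^sup>L \<mu> L)" unfolding log_potential_neg NU ..
  have LPT: "log_potential tau_E z = - A" unfolding A_def w_def by (rule tau_potential(2)[OF z])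
  have vpt: "ln (cmod (1 - w * phi t)) = ln (cmod w) + ln (cmod (phi t)) + L t" for t
  proof -
    have p0: "phi t \<noteq> 0" by (rule phi_nz)
    have w0: "w \<noteq> 0" using w1 by auto
    have e: "1 - w * phi t = (w * phi t) * (q * (1 / phi t) - 1)"
      unfolding q_def using p0 w0 by (simp add: field_simps)
    have u: "cmod (q * (1 / phi t)) < 1"
    proof -
      have "cmod (q * (1 / phi t)) = cmod q * cmod (1 / phi t)" by (rule norm_mult)
      also have "\<dots> \<le> cmod q * 1" using phi_ge1'[of t] by (intro mult_left_mono) auto
      finally show ?thesis using q by simp
    qed
    have n0: "q * (1 / phi t) - 1 \<noteq> 0" using u by auto
    have "cmod (1 - w * phi t) = cmod w * cmod (phi t) * cmod (1 - q * (1 / phi t))"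
      unfolding e by (simp add: norm_mult norm_minus_commute)
    then have "ln (cmod (1 - w * phi t)) = ln (cmod w * cmod (phi t) * cmod (1 - q * (1 / phi t)))" by simp
    also have "\<dots> = ln (cmod w * cmod (phi t)) + ln (cmod (1 - q * (1 / phi t)))"
      by (rule ln_mult_pos) (use w0 p0 n0 in \<open>auto simp: norm_minus_commute\<close>)
    also have "\<dots> = ln (cmod w) + ln (cmod (phi t)) + ln (cmod (1 - q * (1 / phi t)))"
      using w0 p0 by (simp add: ln_mult_pos)
    finally show ?thesis unfolding L_def .
  qed
  have IP: "integrable \<mu> (\<lambda>t. ln (cmod (phi t)))"
  proof (rule mu.integrable_const_bound[where B="\<bar>ln (2 * M)\<bar>"])
    show "AE t in \<mu>. norm (ln (cmod (phi t))) \<le> \<bar>ln (2 * M)\<bar>"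
      using muF
    proof eventually_elim
      case (elim t)
      have p: "cmod (phi t) \<le> 2 * M" and tE: "t \<notin> E_int" using Fpt[OF elim] by auto
      have p1: "1 < cmod (phi t)" by (rule phi_gt1[OF tE])
      have "ln (cmod (phi t)) \<le> ln (2 * M)" using p1 p by (intro ln_mono) auto
      moreover have "0 \<le> ln (cmod (phi t))" using p1 by simp
      ultimately show ?case by simp
    qed
  qed simp
  have V: "v_pot \<mu> z = ln (cmod w) + (\<integral>t. ln (cmod (phi t)) \<partial>\<mu>) + integral\<^sup>L \<mu> L"
  proof -
    have "v_pot \<mu> z = (\<integral>t. ln (cmod w) + ln (cmod (phi t)) + L t \<partial>\<mu>)"
      unfolding v_pot_def w_def[symmetric] vpt ..
    also have "\<dots> = ln (cmod w) + (\<integral>t. ln (cmod (phi t)) \<partial>\<mu>) + integral\<^sup>L \<mu> L"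
      using IP IL mu.prob_space by simp
    finally show ?thesis .
  qed
  show ?thesis unfolding V LPA LPN LPT A_def by (simp add: algebra_simps)
qed


theorem lemma2:
  fixes F :: "real set" and \<mu> \<nu> :: "complex measure"
  assumes "compact F"
    and "F \<inter> {-1..1} = {}"
    and "prob_space \<mu>"
    and "sets \<mu> = sets borel"
    and "AE t in \<mu>. t \<in> complex_of_real ` F"
    and "balayage_onto E_int \<mu> \<nu>"
  shows "\<exists>C. \<forall>z. z \<notin> E_int \<longrightarrow>
           v_pot \<mu> z = - (1/2) * log_potential (measure_add \<nu> tau_E) z + C"
proof -
  note mu = assms(3) and mus = assms(4) and muF = assms(5)
  interpret mu: prob_space \<mu> by (rule mu)
  have nus: "sets \<nu> = sets borel" and nu: "finite_measure \<nu>" and null: "emeasure \<nu> (UNIV - E_int) = 0"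
    and mass: "emeasure \<nu> UNIV = emeasure \<mu> UNIV"
    using assms(6) unfolding balayage_onto_def by auto
  obtain c where pot: "\<forall>x\<in>E_int. log_potential \<nu> x = log_potential \<mu> x + c"
    using assms(6) unfolding balayage_onto_def by auto
  interpret nu: finite_measure \<nu> by (rule nu)
  have spnu: "space \<nu> = UNIV" using sets_eq_imp_space_eq[OF nus] by simp
  have spmu: "space \<mu> = UNIV" using sets_eq_imp_space_eq[OF mus] by simp
  have nuE: "AE t in \<nu>. t \<in> E_int"
  proof (rule AE_I')
    show "UNIV - E_int \<in> null_sets \<nu>" using null nus by (auto simp: null_sets_def)
  qed auto
  have num: "measure \<nu> (space \<nu>) = 1"
  proof -
    have "emeasure \<nu> (space \<nu>) = 1" using mass mu.emeasure_space_1 spnu spmu by simp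
    then show ?thesis by (simp add: measure_def)
  qed
  obtain M where M: "\<forall>r\<in>F. \<bar>r\<bar> \<le> M"
    using compact_imp_bounded[OF assms(1)] unfolding bounded_real by auto
  obtain d where d: "0 < d" "\<forall>r\<in>F. 1 + d \<le> \<bar>r\<bar>"
  proof (cases "F = {}")
    case True
    then show ?thesis using that[of 1] by simp
  next
    case False
    have "compact (abs ` F)" by (intro compact_continuous_image continuous_intros assms(1))
    moreover have "abs ` F \<noteq> {}" using False by simp
    ultimately obtain s where s: "s \<in> abs ` F" "\<forall>t\<in>abs ` F. s \<le> t"
      using compact_attains_inf by blast
    obtain r0 where r0: "r0 \<in> F" "s = \<bar>r0\<bar>" using s(1) by auto
    have "r0 \<notin> {-1..1}" using assms(2) r0(1) by auto
    then have "1 < s" using r0(2) by auto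
    then show ?thesis using that[of "s - 1"] s(2) by auto
  qed
  have FB: "\<forall>r\<in>F. 1 + d \<le> \<bar>r\<bar> \<and> \<bar>r\<bar> \<le> M" using d(2) M by auto
  show ?thesis
  proof (intro exI allI impI)
    fix z assume z: "z \<notin> E_int"
    show "v_pot \<mu> z = - (1/2) * log_potential (measure_add \<nu> tau_E) z + (ln 2 + (\<integral>t. ln (cmod (phi t)) \<partial>\<mu>))"
      by (rule pointwise_identity[OF mu mus muF FB d(1) nu nus nuE num pot z])
  qed
qed


end
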